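(* For every $u\in\mathbb{C}$ there exists $C>0$ such that $|\langle j|W(u)|j\rangle|\ge\frac{C}{j^{3/8}}$ for infinitely many $j\in\mathbb{Z}_{\ge0}$.
   Context: One-mode Fock space: $\ell^2(\mathbb{Z}_{\ge 0})$ with orthonormal particle basis $\{|k\rangle\}_{k\ge0}$. For $v\in\mathbb{C}$ the exponential vector is $|e(v)\rangle=\sum_{k\ge0}\frac{v^k}{\sqrt{k!}}|k\rangle$, and for $u\in\mathbb{C}$ the Weyl unitary $W(u)$ is the unitary operator with $W(u)|e(v)\rangle=\exp(-\tfrac12|u|^2-\bar uv)|e(u+v)\rangle$ for all $v\in\mathbb{C}$. *)

theory Defs
  imports "HOL-Analysis.Analysis"
begin

definition fock :: "(nat \<Rightarrow> complex) set" where
  "fock = {x. summable (\<lambda>k. (cmod (x k))\<^sup>2)}"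

definition fock_inner :: "(nat \<Rightarrow> complex) \<Rightarrow> (nat \<Rightarrow> complex) \<Rightarrow> complex" where
  "fock_inner x y = (\<Sum>k. cnj (x k) * y k)"

definition fock_basis :: "nat \<Rightarrow> (nat \<Rightarrow> complex)" where
  "fock_basis j = (\<lambda>k. if k = j then 1 else 0)"

definition expvec :: "complex \<Rightarrow> (nat \<Rightarrow> complex)" where
  "expvec v = (\<lambda>k. v ^ k / complex_of_real (sqrt (fact k)))"

definition fock_unitary :: "((nat \<Rightarrow> complex) \<Rightarrow> (nat \<Rightarrow> complex)) \<Rightarrow> bool" where
  "fock_unitary T \<longleftrightarrow>
     (\<forall>x. x \<notin> fock \<longrightarrow> T x = (\<lambda>_. 0)) \<and>
     T ` fock = fock \<and>
     (\<forall>x\<in>fock. \<forall>y\<in>fock. \<forall>a b. T (\<lambda>k. a * x k + b * y k) = (\<lambda>k. a * T x k + b * T y k)) \<and>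
     (\<forall>x\<in>fock. \<forall>y\<in>fock. fock_inner (T x) (T y) = fock_inner x y)"

definition is_weyl :: "complex \<Rightarrow> ((nat \<Rightarrow> complex) \<Rightarrow> (nat \<Rightarrow> complex)) \<Rightarrow> bool" where
  "is_weyl u T \<longleftrightarrow> fock_unitary T \<and>
     (\<forall>v. T (expvec v) =
        (\<lambda>k. exp (- complex_of_real ((cmod u)\<^sup>2 / 2) - cnj u * v) * expvec (u + v) k))"

text \<open>The Weyl unitary W(u) (unique by totality of exponential vectors).\<close>
definition weyl :: "complex \<Rightarrow> (nat \<Rightarrow> complex) \<Rightarrow> (nat \<Rightarrow> complex)" where
  "weyl u = (THE T. is_weyl u T)"

definition weyl_elem :: "complex \<Rightarrow> nat \<Rightarrow> nat \<Rightarrow> complex" where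
  "weyl_elem u k j = fock_inner (fock_basis k) (weyl u (fock_basis j))"

end

theory Submission
  imports Defs
begin


lemma powser_coeffs_zero:
  fixes b :: "nat \<Rightarrow> complex"
  assumes "\<And>v. (\<lambda>n. b n * v^n) sums 0"
  shows "b n = 0"
proof (induction n rule: less_induct)
  case (less n)
  have sm: "(\<lambda>m. b (m+n) * v^m) sums 0" if "v \<noteq> 0" for v
  proof -
    have z: "(\<Sum>i<n. b i * v^i) = 0" using less by simp
    have "(\<lambda>m. b (m+n) * v^(m+n)) sums 0"
      using assms[of v] sums_iff_shift[of "\<lambda>i. b i * v^i" n 0] z by simp
    then have "(\<lambda>m. b (m+n) * v^(m+n) * (1 / v^n)) sums (0 * (1/v^n))"
      by (intro sums_mult2) simp
    moreover have "b (m+n) * v^(m+n) * (1 / v^n) = b (m+n) * v^m" for m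
      using that by (simp add: power_add field_simps)
    ultimately show ?thesis by simp
  qed
  have "((\<lambda>_::complex. 0::complex) \<longlongrightarrow> b (0+n)) (at 0)"
    by (rule powser_limit_0_strong[where s=1]) (use sm in auto)
  then show ?case
    using tendsto_const_iff[of "at (0::complex)" "0::complex" "b n"] by simp
qed


definition acoef :: "'a::{real_normed_field,banach} \<Rightarrow> 'a \<Rightarrow> nat \<Rightarrow> nat \<Rightarrow> 'a" where
  "acoef \<alpha> \<beta> k j = (\<Sum>m\<le>j. (if m \<le> k then \<alpha>^(k-m) / (fact m * fact (k-m)) else 0) * (\<beta>^(j-m) / fact (j-m)))"

lemma acoef_sums:
  fixes \<alpha> \<beta> v :: "'a::{real_normed_field,banach}"
  shows "(\<lambda>j. acoef \<alpha> \<beta> k j * v^j) sums ((\<alpha>+v)^k / fact k * exp (\<beta> * v))"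
proof -
  define f where "f m = (if m \<le> k then \<alpha>^(k-m) / (fact m * fact (k-m)) * v^m else 0)" for m
  define g where "g i = (\<beta> * v)^i /\<^sub>R fact i" for i
  have sf: "f sums (\<Sum>m\<le>k. f m)"
    by (rule sums_finite) (auto simp: f_def)
  have snf: "summable (\<lambda>m. norm (f m))"
    by (rule summable_finite[of "{..k}"]) (auto simp: f_def)
  have sng: "summable (\<lambda>i. norm (g i))"
    unfolding g_def by (rule summable_norm_exp)
  have sg: "g sums exp (\<beta> * v)" unfolding g_def by (rule exp_converges)
  have "(\<Sum>m\<le>k. f m) = (\<Sum>m\<le>k. of_nat (k choose m) * v^m * \<alpha>^(k-m)) / fact k"
    by (auto simp: f_def sum_divide_distrib binomial_fact intro!: sum.cong)
  also have "\<dots> = (v+\<alpha>)^k / fact k"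
    by (simp only: binomial_ring[of v \<alpha> k])
  also have "\<dots> = (\<alpha>+v)^k / fact k"
    by (simp add: add.commute)
  finally have fsum: "(\<Sum>m\<le>k. f m) = (\<alpha>+v)^k / fact k" .
  have "(\<lambda>j. \<Sum>i\<le>j. f i * g (j - i)) sums ((\<Sum>m. f m) * (\<Sum>i. g i))"
    by (rule Cauchy_product_sums[OF snf sng])
  moreover have "(\<Sum>m. f m) = (\<alpha>+v)^k / fact k" using sf fsum sums_unique by metis
  moreover have "(\<Sum>i. g i) = exp (\<beta> * v)" using sg sums_unique by metis
  moreover have "(\<Sum>i\<le>j. f i * g (j - i)) = acoef \<alpha> \<beta> k j * v^j" for j
    unfolding acoef_def sum_distrib_right
  proof (intro sum.cong refl)
    fix i assume "i \<in> {..j}"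
    then have ij: "i \<le> j" by simp
    have vv: "v^i * v^(j-i) = v^j" using ij by (simp add: power_add[symmetric])
    show "f i * g (j - i) = (if i \<le> k then \<alpha>^(k-i) / (fact i * fact (k-i)) else 0) * (\<beta>^(j-i) / fact (j-i)) * v^j"
      by (auto simp: f_def g_def scaleR_conv_of_real power_mult_distrib divide_inverse vv[symmetric] mult_ac)
  qed
  ultimately show ?thesis by simp
qed


lemma acoef_min:
  "acoef \<alpha> \<beta> k j = (\<Sum>m\<le>min j k. \<alpha>^(k-m) * \<beta>^(j-m) / (fact m * fact (k-m) * fact (j-m)))"
proof -
  have "acoef \<alpha> \<beta> k j = (\<Sum>m\<in>{..j}. if m \<le> k then \<alpha>^(k-m) * \<beta>^(j-m) / (fact m * fact (k-m) * fact (j-m)) else 0)"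
    unfolding acoef_def by (intro sum.cong) auto
  also have "\<dots> = (\<Sum>m\<in>{..j} \<inter> {m. m \<le> k}. \<alpha>^(k-m) * \<beta>^(j-m) / (fact m * fact (k-m) * fact (j-m)))"
    by (simp add: sum.inter_restrict)
  also have "{..j} \<inter> {m. m \<le> k} = {..min j k}" by auto
  finally show ?thesis .
qed

lemma acoef_norm:
  fixes \<alpha> \<beta> :: "'a::{real_normed_field,banach}"
  shows "norm (acoef \<alpha> \<beta> k j) \<le> acoef (norm \<alpha>) (norm \<beta>) k j"
proof -
  have "norm (acoef \<alpha> \<beta> k j) \<le> (\<Sum>m\<le>min j k. norm (\<alpha>^(k-m) * \<beta>^(j-m) / (fact m * fact (k-m) * fact (j-m))))"
    unfolding acoef_min by (rule norm_sum)
  also have "\<dots> = acoef (norm \<alpha>) (norm \<beta>) k j"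
    unfolding acoef_min by (intro sum.cong refl) (simp add: norm_mult norm_divide norm_power)
  finally show ?thesis .
qed

lemma acoef_nonneg:
  fixes a b :: real
  assumes "a \<ge> 0" "b \<ge> 0"
  shows "acoef a b k j \<ge> 0"
  unfolding acoef_min using assms by (intro sum_nonneg) auto

definition wm :: "complex \<Rightarrow> nat \<Rightarrow> nat \<Rightarrow> complex" where
  "wm u k j = of_real (exp (- ((cmod u)^2/2))) * of_real (sqrt (fact j) * sqrt (fact k)) * acoef u (- cnj u) k j"

lemma sqrt_fact_sq: "sqrt (fact k :: real) * sqrt (fact k) = fact k"
  by simp

lemma wm_gen:
  "(\<lambda>j. wm u k j * expvec v j) sums (exp (- of_real ((cmod u)^2/2) - cnj u * v) * expvec (u+v) k)"
proof -
  define c :: complex where "c = of_real (exp (- ((cmod u)^2/2))) * of_real (sqrt (fact k))"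
  have "(\<lambda>j. acoef u (- cnj u) k j * v^j) sums ((u+v)^k / fact k * exp ((- cnj u) * v))"
    by (rule acoef_sums)
  then have "(\<lambda>j. c * (acoef u (- cnj u) k j * v^j)) sums (c * ((u+v)^k / fact k * exp ((- cnj u) * v)))"
    by (rule sums_mult)
  moreover have "wm u k j * expvec v j = c * (acoef u (- cnj u) k j * v^j)" for j
  proof -
    have "sqrt (fact j :: real) \<noteq> 0" by simp
    then have "(of_real (sqrt (fact j)) :: complex) \<noteq> 0" by simp
    then show ?thesis
      unfolding wm_def expvec_def c_def by (simp add: field_simps)
  qed
  moreover have "c * ((u+v)^k / fact k * exp ((- cnj u) * v)) =
      exp (- of_real ((cmod u)^2/2) - cnj u * v) * expvec (u+v) k"
  proof -
    have nz: "(of_real (sqrt (fact k)) :: complex) \<noteq> 0" by simp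
    have fk: "(fact k :: complex) = of_real (sqrt (fact k)) * of_real (sqrt (fact k))"
      by (metis of_real_fact of_real_mult sqrt_fact_sq)
    have ee: "exp (- of_real ((cmod u)^2/2) - cnj u * v) = of_real (exp (- ((cmod u)^2/2))) * exp ((- cnj u) * v)"
      by (simp add: exp_add[symmetric] exp_of_real[symmetric])
    show ?thesis
      unfolding c_def expvec_def ee using nz
      by (simp add: fk field_simps)
  qed
  ultimately show ?thesis by simp
qed

lemma wm_cnj: "cnj (wm u k j) = wm (-u) j k"
proof -
  have "cnj (acoef u (- cnj u) k j) = acoef (-u) (- cnj (-u)) j k"
    unfolding acoef_min
    by (simp add: min.commute mult_ac)
  then show ?thesis
    unfolding wm_def by (simp add: mult_ac)
qed


lemma norm_expvec: "norm (expvec v l) = norm v ^ l / sqrt (fact l)"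
  by (simp add: expvec_def norm_divide norm_power)

lemma wm_norm: "norm (wm u k j) \<le> exp (- ((cmod u)^2/2)) * (sqrt (fact j) * sqrt (fact k)) * acoef (cmod u) (cmod u) k j"
proof -
  have "norm (wm u k j) = exp (- ((cmod u)^2/2)) * (sqrt (fact j) * sqrt (fact k)) * norm (acoef u (- cnj u) k j)"
    unfolding wm_def by (simp add: norm_mult)
  also have "\<dots> \<le> exp (- ((cmod u)^2/2)) * (sqrt (fact j) * sqrt (fact k)) * acoef (cmod u) (cmod u) k j"
    using acoef_norm[of u "- cnj u" k j] by (intro mult_left_mono) auto
  finally show ?thesis .
qed

lemma wm_fubini_bound:
  fixes u v :: complex and j :: nat
  defines "a \<equiv> cmod u" and "r \<equiv> cmod v"
  defines "B \<equiv> (\<lambda>(k,l). exp (- (a^2)) * sqrt (fact j) * (fact k * (acoef a a j k * (acoef a a k l * r^l))))"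
  shows "B summable_on UNIV"
    and "\<And>k l. norm (wm (-u) j k * wm u k l * expvec v l) \<le> B (k,l)"
    and "\<And>k l. B (k,l) \<ge> 0"
proof -
  have a0: "a \<ge> 0" and r0: "r \<ge> 0" unfolding a_def r_def by auto
  show Bnn: "B (k,l) \<ge> 0" for k l
    unfolding B_def using a0 r0 by (auto intro!: mult_nonneg_nonneg acoef_nonneg)
  show "norm (wm (-u) j k * wm u k l * expvec v l) \<le> B (k,l)" for k l
  proof -
    have e2: "exp (- (a^2/2)) * exp (- (a^2/2)) = exp (- (a^2))"
      by (simp add: exp_add[symmetric])
    have "norm (wm (-u) j k * wm u k l * expvec v l) = norm (wm (-u) j k) * norm (wm u k l) * (r^l / sqrt (fact l))"
      by (simp add: norm_mult norm_expvec r_def)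
    also have "\<dots> \<le> (exp (- (a^2/2)) * (sqrt (fact k) * sqrt (fact j)) * acoef a a j k)
                  * (exp (- (a^2/2)) * (sqrt (fact l) * sqrt (fact k)) * acoef a a k l) * (r^l / sqrt (fact l))"
      using wm_norm[of "-u" j k] wm_norm[of u k l] a0 r0
      by (intro mult_mono mult_nonneg_nonneg acoef_nonneg) (auto simp: a_def)
    also have "\<dots> = B (k,l)"
      unfolding B_def using e2 by (simp add: field_simps)
    finally show ?thesis .
  qed
  define g where "g k = exp (- (a^2)) * sqrt (fact j) * exp (a*r) * (acoef a a j k * (a + r)^k)" for k
  have hs1: "((\<lambda>l. B (k,l)) has_sum g k) UNIV" for k
  proof (rule sums_nonneg_imp_has_sum)
    have "(\<lambda>l. acoef a a k l * r^l) sums ((a+r)^k / fact k * exp (a*r))"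
      by (rule acoef_sums)
    then have "(\<lambda>l. (exp (- (a^2)) * sqrt (fact j) * fact k * acoef a a j k) * (acoef a a k l * r^l))
       sums ((exp (- (a^2)) * sqrt (fact j) * fact k * acoef a a j k) * ((a+r)^k / fact k * exp (a*r)))"
      by (rule sums_mult)
    then show "(\<lambda>l. B (k,l)) sums g k"
      unfolding B_def g_def by (simp add: field_simps)
    show "B (k,l) \<ge> 0" for l by (rule Bnn)
  qed
  have "g summable_on UNIV"
  proof (rule summable_nonneg_imp_summable_on)
    have "(\<lambda>k. acoef a a j k * (a+r)^k) sums ((a+(a+r))^j / fact j * exp (a*(a+r)))"
      by (rule acoef_sums)
    then have "summable (\<lambda>k. (exp (- (a^2)) * sqrt (fact j) * exp (a*r)) * (acoef a a j k * (a+r)^k))"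
      by (intro summable_mult sums_summable)
    then show "summable g" unfolding g_def by (simp add: mult_ac)
    show "g k \<ge> 0" for k
      unfolding g_def using a0 r0 by (auto intro!: mult_nonneg_nonneg acoef_nonneg)
  qed
  then have "B summable_on Sigma UNIV (\<lambda>_. UNIV)"
    using hs1 by (intro summable_on_SigmaI[where g=g]) (auto simp: Bnn)
  then show "B summable_on UNIV" by simp
qed


lemma expvec_1_nz: "expvec 1 l \<noteq> 0"
  by (simp add: expvec_def)

lemma wm_orth: "(\<lambda>k. wm (-u) j k * wm u k l) sums (if l = j then 1 else 0)"
proof -
  define F where "F v k l = wm (-u) j k * wm u k l * expvec v l" for v k l
  define G where "G v k = exp (- of_real ((cmod u)^2/2) - cnj u * v) * expvec (u+v) k" for v k
  have Fsum: "(\<lambda>(k,l). F v k l) summable_on UNIV" for v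
  proof -
    obtain B where B: "B summable_on UNIV" "\<And>k l. norm (F v k l) \<le> B (k,l)" "\<And>k l. B (k,l) \<ge> 0"
      using wm_fubini_bound[where u=u and v=v and j=j] unfolding F_def by blast
    have "(\<lambda>x. norm (B x)) summable_on UNIV"
      using B(1) B(3) by (subst summable_on_cong[where g=B]) auto
    then have "(\<lambda>x. norm ((\<lambda>(k,l). F v k l) x)) summable_on UNIV"
      by (rule Infinite_Sum.abs_summable_on_comparison_test) (use B(2) B(3) in auto)
    then show ?thesis by (rule abs_summable_summable)
  qed
  have Fsum': "(\<lambda>(k,l). F v k l) summable_on Sigma UNIV (\<lambda>_. UNIV)" for v
    using Fsum[of v] by simp
  have Fswap: "(\<lambda>(l,k). F v k l) summable_on Sigma UNIV (\<lambda>_. UNIV)" for v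
    using Fsum[of v] summable_on_swap[of "\<lambda>(k,l). F v k l" UNIV UNIV] by (simp add: case_prod_unfold)
  have ksum: "(\<lambda>k. wm (-u) j k * wm u k l) summable_on UNIV" for l
  proof -
    have "(\<lambda>k. F 1 k l) summable_on UNIV"
      using summable_on_SigmaD1[OF Fswap[of 1], of l] by simp
    then have "(\<lambda>k. (wm (-u) j k * wm u k l) * expvec 1 l) summable_on UNIV"
      unfolding F_def by simp
    then show ?thesis
      using summable_on_cmult_left'[OF expvec_1_nz] by blast
  qed
  define c where "c l = infsum (\<lambda>k. wm (-u) j k * wm u k l) UNIV" for l
  have csums: "(\<lambda>k. wm (-u) j k * wm u k l) sums c l" for l
    unfolding c_def using ksum[of l] by (intro has_sum_imp_sums has_sum_infsum)
  have cgen: "(\<lambda>l. c l * expvec v l) sums expvec v j" for v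
  proof -
    have inner_l: "infsum (F v k) UNIV = wm (-u) j k * G v k" for k
    proof -
      have "(\<lambda>l. wm u k l * expvec v l) sums G v k"
        unfolding G_def by (rule wm_gen)
      then have "(\<lambda>l. wm (-u) j k * (wm u k l * expvec v l)) sums (wm (-u) j k * G v k)"
        by (rule sums_mult)
      then have s: "(\<lambda>l. F v k l) sums (wm (-u) j k * G v k)"
        unfolding F_def by (simp add: mult.assoc)
      have "F v k summable_on UNIV"
        using summable_on_SigmaD1[OF Fsum'[of v], of k] by simp
      then have "(F v k has_sum infsum (F v k) UNIV) UNIV" by simp
      then have "F v k sums infsum (F v k) UNIV" by (rule has_sum_imp_sums)
      then show ?thesis using s sums_unique2 by blast
    qed
    have "(\<lambda>k. infsum (F v k) UNIV) summable_on UNIV"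
      using summable_on_Sigma_banach[OF Fsum'[of v]] by simp
    then have "(\<lambda>k. wm (-u) j k * G v k) summable_on UNIV"
      using inner_l by simp
    then have hk: "(\<lambda>k. wm (-u) j k * G v k) sums infsum (\<lambda>k. wm (-u) j k * G v k) UNIV"
      by (intro has_sum_imp_sums has_sum_infsum)
    define E1 where "E1 = exp (- of_real ((cmod u)^2/2) - cnj u * v)"
    define E2 where "E2 = exp (- of_real ((cmod (-u))^2/2) - cnj (-u) * (u+v))"
    have prod: "E1 * E2 = 1"
    proof -
      have "cnj u * u = of_real ((cmod u)^2)" by (simp only: complex_norm_square mult.commute)
      then have "(- of_real ((cmod u)^2/2) - cnj u * v) + (- of_real ((cmod (-u))^2/2) - cnj (-u) * (u+v)) = 0"
        by (simp add: algebra_simps)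
      then show ?thesis unfolding E1_def E2_def by (metis exp_add exp_zero)
    qed
    have "(\<lambda>k. wm (-u) j k * expvec (u+v) k) sums (E2 * expvec (-u+(u+v)) j)"
      unfolding E2_def by (rule wm_gen)
    then have s3: "(\<lambda>k. E1 * (wm (-u) j k * expvec (u+v) k)) sums (E1 * (E2 * expvec (-u+(u+v)) j))"
      by (rule sums_mult)
    have e3: "E1 * (E2 * expvec (-u+(u+v)) j) = expvec v j"
      using prod by (simp add: mult.assoc[symmetric])
    have e4: "(\<lambda>k. wm (-u) j k * G v k) = (\<lambda>k. E1 * (wm (-u) j k * expvec (u+v) k))"
      unfolding G_def E1_def[symmetric] by (simp add: mult_ac)
    have "(\<lambda>k. wm (-u) j k * G v k) sums expvec v j"
      using s3 unfolding e3 e4 .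
    then have left: "infsum (\<lambda>k. infsum (F v k) UNIV) UNIV = expvec v j"
      using hk sums_unique2 inner_l by simp
    have inner_r: "infsum (\<lambda>k. F v k l) UNIV = c l * expvec v l" for l
    proof -
      have "((\<lambda>k. wm (-u) j k * wm u k l) has_sum c l) UNIV"
        unfolding c_def using ksum[of l] by simp
      then have "((\<lambda>k. wm (-u) j k * wm u k l * expvec v l) has_sum (c l * expvec v l)) UNIV"
        by (rule has_sum_cmult_left)
      then show ?thesis unfolding F_def by (rule infsumI)
    qed
    have swap: "infsum (\<lambda>k. infsum (F v k) UNIV) UNIV = infsum (\<lambda>l. infsum (\<lambda>k. F v k l) UNIV) UNIV"
      using infsum_swap_banach[OF Fsum[of v, unfolded UNIV_Times_UNIV[symmetric]]] by simp
    have "(\<lambda>l. infsum (\<lambda>k. F v k l) UNIV) summable_on UNIV"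
      using summable_on_Sigma_banach[OF Fswap[of v]] by simp
    then have "(\<lambda>l. infsum (\<lambda>k. F v k l) UNIV) sums infsum (\<lambda>l. infsum (\<lambda>k. F v k l) UNIV) UNIV"
      by (intro has_sum_imp_sums has_sum_infsum)
    then show ?thesis using left swap inner_r by simp
  qed
  define b where "b l = c l / of_real (sqrt (fact l)) - (if l = j then 1 / of_real (sqrt (fact j)) else 0)" for l
  have "(\<lambda>l. b l * v^l) sums 0" for v
  proof -
    have s1: "(\<lambda>l. c l / of_real (sqrt (fact l)) * v^l) sums expvec v j"
      using cgen[of v] by (simp add: expvec_def)
    have s2: "(\<lambda>l. (if l = j then 1 / of_real (sqrt (fact j)) else 0) * v^l) sums expvec v j"
    proof -
      have "(\<lambda>l. if l = j then v^j / of_real (sqrt (fact j)) else 0) sums (v^j / of_real (sqrt (fact j)))"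
        by (rule sums_single)
      moreover have "(\<lambda>l. (if l = j then 1 / of_real (sqrt (fact j)) else 0) * v^l) = (\<lambda>l. if l = j then v^j / of_real (sqrt (fact j)) else 0)"
        by auto
      ultimately show ?thesis by (simp add: expvec_def)
    qed
    show ?thesis
      using sums_diff[OF s1 s2] unfolding b_def by (simp add: algebra_simps)
  qed
  then have "b l = 0" for l by (rule powser_coeffs_zero)
  then have "c l = (if l = j then 1 else 0)" for l
  proof -
    have nz: "complex_of_real (sqrt (fact l)) \<noteq> 0" by simp
    have "c l / complex_of_real (sqrt (fact l)) = (if l = j then 1 / complex_of_real (sqrt (fact j)) else 0)"
      using \<open>b l = 0\<close> unfolding b_def by simp
    then show ?thesis using nz by (cases "l = j") (auto simp: field_simps)
  qed
  then show ?thesis using csums by simp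
qed


definition n2 :: "(nat \<Rightarrow> complex) \<Rightarrow> real" where
  "n2 y = (\<Sum>k. (cmod (y k))^2)"

lemma fock_iff: "y \<in> fock \<longleftrightarrow> summable (\<lambda>k. (cmod (y k))^2)"
  by (simp add: fock_def)

lemma n2_nonneg: "y \<in> fock \<Longrightarrow> n2 y \<ge> 0"
  unfolding n2_def fock_iff by (auto intro: suminf_nonneg)

lemma n2_sums: "y \<in> fock \<Longrightarrow> (\<lambda>k. (cmod (y k))^2) sums n2 y"
  unfolding n2_def fock_iff by (simp add: summable_sums)

lemma sq_add_le: "(cmod (a + b))^2 \<le> 2 * (cmod a)^2 + 2 * (cmod b)^2"
proof -
  have "cmod (a+b) \<le> cmod a + cmod b" by (rule norm_triangle_ineq)
  then have "(cmod (a+b))^2 \<le> (cmod a + cmod b)^2" by (intro power_mono) auto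
  also have "\<dots> \<le> 2 * (cmod a)^2 + 2 * (cmod b)^2"
  proof -
    have "(cmod a + cmod b)^2 + (cmod a - cmod b)^2 = 2 * (cmod a)^2 + 2 * (cmod b)^2"
      by (simp add: power2_eq_square algebra_simps)
    moreover have "(cmod a - cmod b)^2 \<ge> 0" by simp
    ultimately show ?thesis by linarith
  qed
  finally show ?thesis .
qed

lemma fock_add: "y \<in> fock \<Longrightarrow> z \<in> fock \<Longrightarrow> (\<lambda>k. y k + z k) \<in> fock"
  unfolding fock_iff
  by (rule summable_comparison_test'[where g="\<lambda>k. 2 * (cmod (y k))^2 + 2 * (cmod (z k))^2"])
     (auto intro!: summable_add summable_mult sq_add_le)

lemma fock_scale: "y \<in> fock \<Longrightarrow> (\<lambda>k. c * y k) \<in> fock"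
  unfolding fock_iff by (simp add: norm_mult power_mult_distrib summable_mult)

lemma fock_lin: "y \<in> fock \<Longrightarrow> z \<in> fock \<Longrightarrow> (\<lambda>k. a * y k + b * z k) \<in> fock"
  using fock_add fock_scale by blast

lemma fock_diff: "y \<in> fock \<Longrightarrow> z \<in> fock \<Longrightarrow> (\<lambda>k. y k - z k) \<in> fock"
  using fock_lin[of y z 1 "-1"] by simp

lemma fock_zero: "(\<lambda>k. 0) \<in> fock"
  unfolding fock_iff by simp

lemma fock_sum: "finite I \<Longrightarrow> (\<And>i. i \<in> I \<Longrightarrow> f i \<in> fock) \<Longrightarrow> (\<lambda>k. \<Sum>i\<in>I. f i k) \<in> fock"
proof (induction I rule: finite_induct)
  case empty then show ?case by (simp add: fock_zero)
next
  case (insert x F)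
  then show ?case using fock_add[of "f x" "\<lambda>k. \<Sum>i\<in>F. f i k"] by simp
qed

lemma fock_finite_support: "(\<And>k. k \<ge> N \<Longrightarrow> y k = 0) \<Longrightarrow> y \<in> fock"
  unfolding fock_iff by (rule summable_finite[of "{..<N}"]) auto

lemma fock_basis_in: "fock_basis j \<in> fock"
  by (rule fock_finite_support[of "Suc j"]) (auto simp: fock_basis_def)

lemma prod_summable:
  assumes "y \<in> fock" "z \<in> fock"
  shows "summable (\<lambda>k. cmod (y k) * cmod (z k))"
proof (rule summable_comparison_test'[where g="\<lambda>k. (cmod (y k))^2 + (cmod (z k))^2"])
  show "summable (\<lambda>k. (cmod (y k))^2 + (cmod (z k))^2)"
    using assms unfolding fock_iff by (intro summable_add)
  show "norm (cmod (y k) * cmod (z k)) \<le> (cmod (y k))^2 + (cmod (z k))^2" for k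
  proof -
    have "2 * cmod (y k) * cmod (z k) \<le> (cmod (y k))^2 + (cmod (z k))^2" by (rule sum_squares_bound)
    moreover have "cmod (y k) * cmod (z k) \<ge> 0" by simp
    moreover have "norm (cmod (y k) * cmod (z k)) = cmod (y k) * cmod (z k)" by simp
    ultimately show ?thesis by linarith
  qed
qed

lemma inner_summable:
  assumes "y \<in> fock" "z \<in> fock" and that: "\<And>w. cmod (f w) = cmod w"
  shows "summable (\<lambda>k. f (y k) * z k)"
proof (rule summable_norm_cancel, rule summable_comparison_test'[OF prod_summable[OF assms(1) assms(2)]])
  show "norm (norm (f (y k) * z k)) \<le> cmod (y k) * cmod (z k)" for k
    by (simp add: norm_mult that)
qed

lemma inner_summable_cnj: "y \<in> fock \<Longrightarrow> z \<in> fock \<Longrightarrow> summable (\<lambda>k. cnj (y k) * z k)"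
  by (rule inner_summable[where f=cnj]) auto

lemma inner_summable_id: "y \<in> fock \<Longrightarrow> z \<in> fock \<Longrightarrow> summable (\<lambda>k. y k * z k)"
  by (rule inner_summable[where f="\<lambda>w. w"]) auto

lemma cauchy_schwarz:
  assumes "y \<in> fock" "z \<in> fock"
  shows "(\<Sum>k. cmod (y k) * cmod (z k)) \<le> sqrt (n2 y) * sqrt (n2 z)"
proof (rule suminf_le_const[OF prod_summable[OF assms]])
  fix n
  have "(\<Sum>k<n. cmod (y k) * cmod (z k)) = (\<Sum>k<n. \<bar>cmod (y k)\<bar> * \<bar>cmod (z k)\<bar>)" by simp
  also have "\<dots> \<le> L2_set (\<lambda>k. cmod (y k)) {..<n} * L2_set (\<lambda>k. cmod (z k)) {..<n}"
    by (rule L2_set_mult_ineq)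
  also have "\<dots> \<le> sqrt (n2 y) * sqrt (n2 z)"
  proof (intro mult_mono)
    have "(\<Sum>k<n. (cmod (y k))^2) \<le> n2 y"
      unfolding n2_def using assms(1) unfolding fock_iff by (intro sum_le_suminf) auto
    then show "L2_set (\<lambda>k. cmod (y k)) {..<n} \<le> sqrt (n2 y)" unfolding L2_set_def by simp
    have "(\<Sum>k<n. (cmod (z k))^2) \<le> n2 z"
      unfolding n2_def using assms(2) unfolding fock_iff by (intro sum_le_suminf) auto
    then show "L2_set (\<lambda>k. cmod (z k)) {..<n} \<le> sqrt (n2 z)" unfolding L2_set_def by simp
  qed (auto simp: L2_set_def n2_nonneg assms intro: sum_nonneg)
  finally show "(\<Sum>k<n. cmod (y k) * cmod (z k)) \<le> sqrt (n2 y) * sqrt (n2 z)" .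
qed

lemma inner_bound:
  assumes "y \<in> fock" "z \<in> fock"
  shows "cmod (\<Sum>k. y k * z k) \<le> sqrt (n2 y) * sqrt (n2 z)"
proof -
  have "cmod (\<Sum>k. y k * z k) \<le> (\<Sum>k. cmod (y k * z k))"
    by (rule summable_norm) (use prod_summable[OF assms] in \<open>simp add: norm_mult\<close>)
  also have "\<dots> = (\<Sum>k. cmod (y k) * cmod (z k))" by (simp add: norm_mult)
  also have "\<dots> \<le> sqrt (n2 y) * sqrt (n2 z)" by (rule cauchy_schwarz[OF assms])
  finally show ?thesis .
qed

lemma coord_bound:
  assumes "y \<in> fock"
  shows "cmod (y k) \<le> sqrt (n2 y)"
proof -
  have "(\<Sum>i\<in>{k}. (cmod (y i))^2) \<le> n2 y"
    unfolding n2_def using assms unfolding fock_iff by (intro sum_le_suminf) auto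
  then have "(cmod (y k))^2 \<le> n2 y" by simp
  then show ?thesis using real_le_rsqrt by blast
qed


definition mop :: "(nat \<Rightarrow> nat \<Rightarrow> complex) \<Rightarrow> (nat \<Rightarrow> complex) \<Rightarrow> nat \<Rightarrow> complex" where
  "mop M y = (if y \<in> fock then (\<lambda>k. \<Sum>j. M k j * y j) else (\<lambda>_. 0))"

definition rows_on :: "(nat \<Rightarrow> nat \<Rightarrow> complex) \<Rightarrow> bool" where
  "rows_on M \<longleftrightarrow> (\<forall>k k'. (\<lambda>j. M k j * cnj (M k' j)) sums (if k = k' then 1 else 0))"

definition cols_on :: "(nat \<Rightarrow> nat \<Rightarrow> complex) \<Rightarrow> bool" where
  "cols_on M \<longleftrightarrow> (\<forall>j l. (\<lambda>k. cnj (M k j) * M k l) sums (if j = l then 1 else 0))"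

definition adj :: "(nat \<Rightarrow> nat \<Rightarrow> complex) \<Rightarrow> nat \<Rightarrow> nat \<Rightarrow> complex" where
  "adj M = (\<lambda>j k. cnj (M k j))"

lemma adj_adj [simp]: "adj (adj M) = M"
  by (simp add: adj_def)

lemma rows_adj: "rows_on (adj M) \<longleftrightarrow> cols_on M"
  unfolding rows_on_def cols_on_def adj_def by (simp add: eq_commute)

lemma cols_adj: "cols_on (adj M) \<longleftrightarrow> rows_on M"
  unfolding rows_on_def cols_on_def adj_def by (simp add: mult.commute eq_commute)

lemma cmod_sq_cnj: "z * cnj z = of_real ((cmod z)^2)"
  by (rule complex_norm_square[symmetric])

lemma row_fock:
  assumes "rows_on M"
  shows "M k \<in> fock" "n2 (M k) = 1" "(\<lambda>j. cnj (M k j)) \<in> fock" "n2 (\<lambda>j. cnj (M k j)) = 1"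
proof -
  have "(\<lambda>j. M k j * cnj (M k j)) sums 1" using assms unfolding rows_on_def by (metis (full_types))
  then have "(\<lambda>j. Re (M k j * cnj (M k j))) sums Re 1" by (simp add: sums_complex_iff)
  then have s: "(\<lambda>j. (cmod (M k j))^2) sums 1" by (simp add: cmod_sq_cnj)
  then show "M k \<in> fock" "n2 (M k) = 1" unfolding fock_iff n2_def by (auto simp: sums_iff)
  show "(\<lambda>j. cnj (M k j)) \<in> fock" "n2 (\<lambda>j. cnj (M k j)) = 1" using s unfolding fock_iff n2_def by (auto simp: sums_iff)
qed

lemma mop_apply: "y \<in> fock \<Longrightarrow> mop M y k = (\<Sum>j. M k j * y j)"
  by (simp add: mop_def)

lemma mop_coord_bound:
  assumes "rows_on M" "y \<in> fock"
  shows "cmod (mop M y k) \<le> sqrt (n2 y)"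
  using inner_bound[OF row_fock(1)[OF assms(1)] assms(2), of k] row_fock(2)[OF assms(1), of k] assms(2)
  by (simp add: mop_apply)

lemma mop_sums:
  assumes "rows_on M" "y \<in> fock"
  shows "(\<lambda>j. M k j * y j) sums mop M y k"
proof -
  have "summable (\<lambda>j. M k j * y j)"
    by (rule inner_summable_id[OF row_fock(1)[OF assms(1)] assms(2)])
  then show ?thesis using assms(2) by (simp add: mop_apply summable_sums)
qed

lemma bessel_finite:
  assumes M: "rows_on M" and y: "y \<in> fock"
  shows "(\<Sum>k<K. (cmod (mop M y k))^2) \<le> n2 y"
proof -
  define c where "c k = mop M y k" for k
  define z where "z j = (\<Sum>k<K. c k * cnj (M k j))" for j
  define S where "S = (\<Sum>k<K. (cmod (c k))^2)"
  have S0: "S \<ge> 0" unfolding S_def by (intro sum_nonneg) auto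
  have zf: "z \<in> fock" unfolding z_def
    by (intro fock_sum fock_scale row_fock(3)[OF M]) auto
  have czf: "(\<lambda>j. cnj (z j)) \<in> fock" using zf unfolding fock_iff by simp
  have n2cz: "n2 (\<lambda>j. cnj (z j)) = n2 z" unfolding n2_def by simp
  have s1: "(\<lambda>j. cnj (z j) * y j) sums of_real S"
  proof -
    have "(\<lambda>j. \<Sum>k<K. cnj (c k) * (M k j * y j)) sums (\<Sum>k<K. cnj (c k) * c k)"
      by (intro sums_sum sums_mult) (unfold c_def, rule mop_sums[OF M y])
    moreover have "(\<Sum>k<K. cnj (c k) * c k) = of_real S"
      unfolding S_def of_real_sum by (intro sum.cong refl) (metis cmod_sq_cnj mult.commute)
    moreover have "(\<lambda>j. \<Sum>k<K. cnj (c k) * (M k j * y j)) = (\<lambda>j. cnj (z j) * y j)"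
      unfolding z_def by (simp add: sum_distrib_right sum_distrib_left mult_ac)
    ultimately show ?thesis by simp
  qed
  have s2: "(\<lambda>j. z j * cnj (z j)) sums of_real S"
  proof -
    have "(\<lambda>j. \<Sum>k<K. \<Sum>k'<K. (c k * cnj (c k')) * (M k' j * cnj (M k j)))
           sums (\<Sum>k<K. \<Sum>k'<K. (c k * cnj (c k')) * (if k' = k then 1 else 0))"
      using M unfolding rows_on_def by (intro sums_sum sums_mult) auto
    moreover have "(\<Sum>k<K. \<Sum>k'<K. (c k * cnj (c k')) * (if k' = k then 1 else 0)) = of_real S"
    proof -
      have "(\<Sum>k'<K. (c k * cnj (c k')) * (if k' = k then 1 else 0)) = c k * cnj (c k)" if "k \<in> {..<K}" for k
      proof -
        have "(\<Sum>k'<K. (c k * cnj (c k')) * (if k' = k then 1 else 0)) = (\<Sum>k'<K. if k' = k then c k * cnj (c k') else 0)"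
          by (intro sum.cong) auto
        also have "\<dots> = c k * cnj (c k)" using that by (simp add: sum.delta)
        finally show ?thesis .
      qed
      then have "(\<Sum>k<K. \<Sum>k'<K. (c k * cnj (c k')) * (if k' = k then 1 else 0)) = (\<Sum>k<K. c k * cnj (c k))"
        by (rule sum.cong[OF refl])
      also have "\<dots> = of_real S" unfolding S_def of_real_sum by (intro sum.cong refl) (rule cmod_sq_cnj)
      finally show ?thesis .
    qed
    moreover have "(\<lambda>j. \<Sum>k<K. \<Sum>k'<K. (c k * cnj (c k')) * (M k' j * cnj (M k j))) = (\<lambda>j. z j * cnj (z j))"
    proof
      fix j
      show "(\<Sum>k<K. \<Sum>k'<K. (c k * cnj (c k')) * (M k' j * cnj (M k j))) = z j * cnj (z j)"
        unfolding z_def cnj_sum sum_product by (intro sum.cong refl) (simp add: mult_ac)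
    qed
    ultimately show ?thesis by simp
  qed
  have n2z: "n2 z = S"
  proof -
    have "(\<lambda>j. Re (z j * cnj (z j))) sums Re (of_real S)" using s2 by (simp add: sums_complex_iff)
    then have "(\<lambda>j. (cmod (z j))^2) sums S" by (simp add: cmod_sq_cnj)
    then show ?thesis unfolding n2_def by (simp add: sums_iff)
  qed
  have "S = cmod (of_real S :: complex)" using S0 by simp
  also have "\<dots> = cmod (\<Sum>j. cnj (z j) * y j)" using s1 by (simp add: sums_iff)
  also have "\<dots> \<le> sqrt (n2 (\<lambda>j. cnj (z j))) * sqrt (n2 y)" by (rule inner_bound[OF czf y])
  also have "\<dots> = sqrt S * sqrt (n2 y)" using n2cz n2z by simp
  finally have le: "S \<le> sqrt S * sqrt (n2 y)" .
  have "S \<le> n2 y"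
  proof (cases "S = 0")
    case True then show ?thesis using n2_nonneg[OF y] by simp
  next
    case False
    then have "sqrt S > 0" using S0 by simp
    have ss: "sqrt S * sqrt S = S" using S0 by simp
    have "sqrt S * sqrt S \<le> sqrt S * sqrt (n2 y)" by (subst ss) (rule le)
    then have "sqrt S \<le> sqrt (n2 y)" by (rule mult_left_le_imp_le) (use \<open>sqrt S > 0\<close> in simp)
    then show ?thesis by simp
  qed
  then show ?thesis unfolding S_def c_def .
qed

lemma bessel:
  assumes M: "rows_on M" and y: "y \<in> fock"
  shows "mop M y \<in> fock" "n2 (mop M y) \<le> n2 y"
proof -
  have sm: "summable (\<lambda>k. (cmod (mop M y k))^2)"
    by (rule summableI_nonneg_bounded[where x="n2 y"]) (use bessel_finite[OF M y] in auto)
  then show "mop M y \<in> fock" unfolding fock_iff .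
  have "(\<Sum>k. (cmod (mop M y k))^2) \<le> n2 y"
    by (rule suminf_le_const[OF sm]) (use bessel_finite[OF M y] in auto)
  then show "n2 (mop M y) \<le> n2 y" unfolding n2_def[of "mop M y"] .
qed

lemma mop_lin:
  assumes M: "rows_on M" and y: "y \<in> fock" and z: "z \<in> fock"
  shows "mop M (\<lambda>k. a * y k + b * z k) = (\<lambda>k. a * mop M y k + b * mop M z k)"
proof
  fix k
  have "(\<lambda>j. M k j * (a * y j + b * z j)) sums (a * mop M y k + b * mop M z k)"
  proof -
    have "(\<lambda>j. a * (M k j * y j) + b * (M k j * z j)) sums (a * mop M y k + b * mop M z k)"
      by (intro sums_add sums_mult mop_sums[OF M y] mop_sums[OF M z])
    then show ?thesis by (simp add: algebra_simps)
  qed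
  then show "mop M (\<lambda>k. a * y k + b * z k) k = a * mop M y k + b * mop M z k"
    using fock_lin[OF y z, of a b] by (simp add: mop_apply sums_iff)
qed

lemma mop_diff:
  assumes M: "rows_on M" and y: "y \<in> fock" and z: "z \<in> fock"
  shows "mop M (\<lambda>k. y k - z k) = (\<lambda>k. mop M y k - mop M z k)"
  using mop_lin[OF M y z, of 1 "-1"] by simp

lemma tail_small:
  assumes y: "y \<in> fock" and r: "r > 0"
  shows "\<exists>N0. \<forall>N\<ge>N0. n2 (\<lambda>j. if j < N then 0 else y j) < r"
proof -
  have sm: "summable (\<lambda>k. (cmod (y k))^2)" using y unfolding fock_iff .
  obtain N0 where N0: "\<forall>n\<ge>N0. norm (\<Sum>i. (cmod (y (i + n)))^2) < r"
    using suminf_exist_split[OF r sm] by blast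
  have "n2 (\<lambda>j. if j < N then 0 else y j) < r" if "N \<ge> N0" for N
  proof -
    define g where "g k = (cmod (if k < N then 0 else y k))^2" for k
    have "(\<lambda>i. (cmod (y (i + N)))^2) sums (\<Sum>i. (cmod (y (i + N)))^2)"
      using summable_ignore_initial_segment[OF sm, of N] by (simp add: summable_sums)
    then have "(\<lambda>i. g (i + N)) sums (\<Sum>i. (cmod (y (i + N)))^2)" by (simp add: g_def)
    then have "g sums ((\<Sum>i. (cmod (y (i + N)))^2) + (\<Sum>i<N. g i))" by (simp add: sums_iff_shift)
    moreover have "(\<Sum>i<N. g i) = 0" by (simp add: g_def)
    ultimately have "g sums (\<Sum>i. (cmod (y (i + N)))^2)" by simp
    then have "n2 (\<lambda>j. if j < N then 0 else y j) = (\<Sum>i. (cmod (y (i + N)))^2)"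
      unfolding n2_def g_def by (simp add: sums_iff)
    also have "\<dots> < r"
    proof -
      have "norm (\<Sum>i. (cmod (y (i + N)))^2) < r" using N0 that by blast
      then show ?thesis by (simp add: abs_less_iff)
    qed
    finally show ?thesis .
  qed
  then show ?thesis by blast
qed

lemma mop_left_inverse:
  assumes M: "rows_on M" and C: "cols_on M" and y: "y \<in> fock"
  shows "mop (adj M) (mop M y) = y"
proof
  fix i
  have MA: "rows_on (adj M)" using C by (simp add: rows_adj)
  have Ty: "mop M y \<in> fock" by (rule bessel(1)[OF M y])
  have key: "cmod (mop (adj M) (mop M y) i - y i) \<le> sqrt (n2 (\<lambda>j. if j < N then 0 else y j))" if "N > i" for N
  proof -
    define yN where "yN j = (if j < N then y j else 0)" for j
    define d where "d j = (if j < N then 0 else y j)" for j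
    have yNf: "yN \<in> fock" by (rule fock_finite_support[of N]) (auto simp: yN_def)
    have dd: "d = (\<lambda>j. y j - yN j)" by (auto simp: d_def yN_def)
    have df: "d \<in> fock" unfolding dd by (rule fock_diff[OF y yNf])
    have TyN: "mop M yN \<in> fock" by (rule bessel(1)[OF M yNf])
    have Td: "mop M d \<in> fock" by (rule bessel(1)[OF M df])
    have TyN_eq: "mop M yN k = (\<Sum>j<N. M k j * y j)" for k
    proof -
      have "(\<lambda>j. M k j * yN j) sums (\<Sum>j\<in>{..<N}. M k j * yN j)"
        by (rule sums_finite) (auto simp: yN_def)
      then show ?thesis using yNf by (simp add: mop_apply sums_iff yN_def)
    qed
    have AyN: "mop (adj M) (mop M yN) i = y i"
    proof -
      have "(\<lambda>k. \<Sum>j<N. (cnj (M k i) * M k j) * y j) sums (\<Sum>j<N. (if i = j then 1 else 0) * y j)"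
        using C unfolding cols_on_def by (intro sums_sum sums_mult2) auto
      moreover have "(\<Sum>j<N. (if i = j then 1 else 0) * y j) = y i"
    proof -
      have "(\<Sum>j<N. (if i = j then 1 else 0) * y j) = (\<Sum>j<N. if i = j then y j else 0)"
        by (intro sum.cong) auto
      also have "\<dots> = y i" using that by (simp add: sum.delta)
      finally show ?thesis .
    qed
      moreover have "(\<lambda>k. \<Sum>j<N. (cnj (M k i) * M k j) * y j) = (\<lambda>k. adj M i k * mop M yN k)"
        by (simp add: TyN_eq adj_def sum_distrib_left mult_ac)
      ultimately have "(\<lambda>k. adj M i k * mop M yN k) sums y i" by simp
      then show ?thesis using TyN by (simp add: mop_apply sums_iff)
    qed
    have "mop (adj M) (mop M y) i - y i = mop (adj M) (mop M y) i - mop (adj M) (mop M yN) i"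
      by (simp add: AyN)
    also have "\<dots> = mop (adj M) (\<lambda>k. mop M y k - mop M yN k) i"
      by (simp add: mop_diff[OF MA Ty TyN])
    also have "(\<lambda>k. mop M y k - mop M yN k) = mop M d"
      by (simp add: dd mop_diff[OF M y yNf])
    finally have "cmod (mop (adj M) (mop M y) i - y i) = cmod (mop (adj M) (mop M d) i)" by simp
    also have "\<dots> \<le> sqrt (n2 (mop M d))" by (rule mop_coord_bound[OF MA Td])
    also have "\<dots> \<le> sqrt (n2 d)" using bessel(2)[OF M df] by simp
    finally show ?thesis unfolding d_def .
  qed
  show "mop (adj M) (mop M y) i = y i"
  proof (rule ccontr)
    assume ne: "mop (adj M) (mop M y) i \<noteq> y i"
    define e where "e = cmod (mop (adj M) (mop M y) i - y i)"
    have e0: "e > 0" using ne by (simp add: e_def)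
    obtain N0 where N0: "\<forall>N\<ge>N0. n2 (\<lambda>j. if j < N then 0 else y j) < e^2"
      using tail_small[OF y, of "e^2"] e0 by auto
    define N where "N = max N0 (Suc i)"
    have "e \<le> sqrt (n2 (\<lambda>j. if j < N then 0 else y j))" unfolding e_def by (rule key) (simp add: N_def)
    also have "\<dots> < sqrt (e^2)"
    proof (rule real_sqrt_less_mono)
      show "n2 (\<lambda>j. if j < N then 0 else y j) < e^2"
        using N0 max.cobounded1 unfolding N_def by blast
    qed
    also have "\<dots> = e" using e0 by simp
    finally show False by simp
  qed
qed


lemma cmod_add_sq: "(cmod (a + b))^2 = (cmod a)^2 + (cmod b)^2 + 2 * Re (cnj a * b)"
  unfolding cmod_power2 by (simp add: power2_eq_square algebra_simps)

lemma inner_sums: "y \<in> fock \<Longrightarrow> z \<in> fock \<Longrightarrow> (\<lambda>k. cnj (y k) * z k) sums fock_inner y z"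
  unfolding fock_inner_def by (intro summable_sums inner_summable_cnj)

lemma n2_add:
  assumes y: "y \<in> fock" and z: "z \<in> fock"
  shows "n2 (\<lambda>k. y k + z k) = n2 y + n2 z + 2 * Re (fock_inner y z)"
proof -
  have "(\<lambda>k. (cmod (y k))^2 + (cmod (z k))^2 + 2 * Re (cnj (y k) * z k)) sums (n2 y + n2 z + 2 * Re (fock_inner y z))"
  proof (intro sums_add sums_mult n2_sums y z)
    show "(\<lambda>k. Re (cnj (y k) * z k)) sums Re (fock_inner y z)"
      using inner_sums[OF y z] by (simp add: sums_complex_iff)
  qed
  then have "(\<lambda>k. (cmod (y k + z k))^2) sums (n2 y + n2 z + 2 * Re (fock_inner y z))"
    by (simp add: cmod_add_sq)
  moreover have "(\<lambda>k. (cmod (y k + z k))^2) sums n2 (\<lambda>k. y k + z k)"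
    using n2_sums[OF fock_add[OF y z]] by simp
  ultimately show ?thesis using sums_unique2 by blast
qed

lemma inner_scale:
  assumes y: "y \<in> fock" and z: "z \<in> fock"
  shows "fock_inner y (\<lambda>k. c * z k) = c * fock_inner y z"
proof -
  have "(\<lambda>k. c * (cnj (y k) * z k)) sums (c * fock_inner y z)"
    by (intro sums_mult inner_sums y z)
  then have "(\<lambda>k. cnj (y k) * (c * z k)) sums (c * fock_inner y z)" by (simp add: mult_ac)
  moreover have "(\<lambda>k. cnj (y k) * (c * z k)) sums fock_inner y (\<lambda>k. c * z k)"
    using inner_sums[OF y fock_scale[OF z]] by simp
  ultimately show ?thesis using sums_unique2 by blast
qed

lemma n2_inner: "y \<in> fock \<Longrightarrow> n2 y = Re (fock_inner y y)"
proof -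
  assume y: "y \<in> fock"
  have "(\<lambda>k. Re (cnj (y k) * y k)) sums Re (fock_inner y y)"
    using inner_sums[OF y y] by (simp add: sums_complex_iff)
  moreover have "Re (cnj (y k) * y k) = (cmod (y k))^2" for k
    by (metis Re_complex_of_real cmod_sq_cnj mult.commute)
  ultimately have "(\<lambda>k. (cmod (y k))^2) sums Re (fock_inner y y)"
    by simp
  then show ?thesis using n2_sums[OF y] sums_unique2 by blast
qed

lemma mop_n2:
  assumes M: "rows_on M" and C: "cols_on M" and y: "y \<in> fock"
  shows "n2 (mop M y) = n2 y"
proof -
  have MA: "rows_on (adj M)" using C by (simp add: rows_adj)
  have Ty: "mop M y \<in> fock" by (rule bessel(1)[OF M y])
  have "n2 y = n2 (mop (adj M) (mop M y))" by (simp add: mop_left_inverse[OF M C y])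
  also have "\<dots> \<le> n2 (mop M y)" by (rule bessel(2)[OF MA Ty])
  finally show ?thesis using bessel(2)[OF M y] by simp
qed

lemma mop_inner:
  assumes M: "rows_on M" and C: "cols_on M" and y: "y \<in> fock" and z: "z \<in> fock"
  shows "fock_inner (mop M y) (mop M z) = fock_inner y z"
proof -
  have ReP: "Re (fock_inner (mop M y) (mop M w)) = Re (fock_inner y w)" if w: "w \<in> fock" for w
  proof -
    have Ty: "mop M y \<in> fock" by (rule bessel(1)[OF M y])
    have Tw: "mop M w \<in> fock" by (rule bessel(1)[OF M w])
    have lin: "mop M (\<lambda>k. y k + w k) = (\<lambda>k. mop M y k + mop M w k)"
      using mop_lin[OF M y w, of 1 1] by simp
    have "n2 (\<lambda>k. y k + w k) = n2 (mop M (\<lambda>k. y k + w k))"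
      by (rule mop_n2[OF M C fock_add[OF y w], symmetric])
    also have "\<dots> = n2 (mop M y) + n2 (mop M w) + 2 * Re (fock_inner (mop M y) (mop M w))"
      unfolding lin by (rule n2_add[OF Ty Tw])
    finally have "n2 y + n2 w + 2 * Re (fock_inner y w) = n2 (mop M y) + n2 (mop M w) + 2 * Re (fock_inner (mop M y) (mop M w))"
      using n2_add[OF y w] by simp
    then show ?thesis using mop_n2[OF M C y] mop_n2[OF M C w] by simp
  qed
  have re: "Re (fock_inner (mop M y) (mop M z)) = Re (fock_inner y z)" by (rule ReP[OF z])
  have iz: "(\<lambda>k. \<i> * z k) \<in> fock" by (rule fock_scale[OF z])
  have Tiz: "mop M (\<lambda>k. \<i> * z k) = (\<lambda>k. \<i> * mop M z k)"
    using mop_lin[OF M z z, of "\<i>" 0] by simp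
  have "Re (\<i> * fock_inner (mop M y) (mop M z)) = Re (\<i> * fock_inner y z)"
    using ReP[OF iz] unfolding Tiz
    by (simp add: inner_scale[OF bessel(1)[OF M y] bessel(1)[OF M z]] inner_scale[OF y z])
  then have im: "Im (fock_inner (mop M y) (mop M z)) = Im (fock_inner y z)" by simp
  show ?thesis using re im by (simp add: complex_eq_iff)
qed

lemma mop_unitary:
  assumes M: "rows_on M" and C: "cols_on M"
  shows "fock_unitary (mop M)"
  unfolding fock_unitary_def
proof (intro conjI ballI allI impI)
  show "mop M x = (\<lambda>_. 0)" if "x \<notin> fock" for x using that by (simp add: mop_def)
  show "mop M ` fock = fock"
  proof
    show "mop M ` fock \<subseteq> fock" using bessel(1)[OF M] by blast
    show "fock \<subseteq> mop M ` fock"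
    proof
      fix z assume z: "z \<in> fock"
      have MA: "rows_on (adj M)" using C by (simp add: rows_adj)
      have CA: "cols_on (adj M)" using M by (simp add: cols_adj)
      have "mop (adj (adj M)) (mop (adj M) z) = z" by (rule mop_left_inverse[OF MA CA z])
      then have "z = mop M (mop (adj M) z)" by simp
      moreover have "mop (adj M) z \<in> fock" by (rule bessel(1)[OF MA z])
      ultimately show "z \<in> mop M ` fock" by blast
    qed
  qed
  show "mop M (\<lambda>k. a * x k + b * y k) = (\<lambda>k. a * mop M x k + b * mop M y k)"
    if "x \<in> fock" "y \<in> fock" for x y a b by (rule mop_lin[OF M that])
  show "fock_inner (mop M x) (mop M y) = fock_inner x y" if "x \<in> fock" "y \<in> fock" for x y
    by (rule mop_inner[OF M C that])
qed


lemma rows_wm: "rows_on (wm u)"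
  unfolding rows_on_def
proof (intro allI)
  fix k k'
  have "(\<lambda>j. wm (-(-u)) k j * wm (-u) j k') sums (if k' = k then 1 else 0)"
    by (rule wm_orth)
  then show "(\<lambda>j. wm u k j * cnj (wm u k' j)) sums (if k = k' then 1 else 0)"
    by (simp add: wm_cnj eq_commute)
qed

lemma cols_wm: "cols_on (wm u)"
  unfolding cols_on_def
proof (intro allI)
  fix j l
  have "(\<lambda>k. wm (-u) j k * wm u k l) sums (if l = j then 1 else 0)"
    by (rule wm_orth)
  then show "(\<lambda>k. cnj (wm u k j) * wm u k l) sums (if j = l then 1 else 0)"
    by (simp add: wm_cnj eq_commute)
qed

lemma expvec_fock: "expvec v \<in> fock"
proof -
  have "summable (\<lambda>n. inverse (fact n) * ((cmod v)^2)^n)" by (rule summable_exp)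
  moreover have "(cmod (expvec v n))^2 = inverse (fact n) * ((cmod v)^2)^n" for n
    by (simp add: norm_expvec power_divide power_mult[symmetric] power_mult_distrib field_simps)
  ultimately show ?thesis unfolding fock_iff by simp
qed

definition W0 :: "complex \<Rightarrow> (nat \<Rightarrow> complex) \<Rightarrow> nat \<Rightarrow> complex" where
  "W0 u = mop (wm u)"

lemma W0_weyl: "is_weyl u (W0 u)"
  unfolding is_weyl_def W0_def
proof (intro conjI allI)
  show "fock_unitary (mop (wm u))" by (rule mop_unitary[OF rows_wm cols_wm])
  fix v
  show "mop (wm u) (expvec v) = (\<lambda>k. exp (- complex_of_real ((cmod u)\<^sup>2 / 2) - cnj u * v) * expvec (u + v) k)"
  proof
    fix k
    show "mop (wm u) (expvec v) k = exp (- complex_of_real ((cmod u)\<^sup>2 / 2) - cnj u * v) * expvec (u + v) k"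
      using wm_gen[of u k v] expvec_fock[of v] by (simp add: mop_apply sums_iff)
  qed
qed

lemma unitary_expand:
  assumes T: "fock_unitary T" and y: "y \<in> fock"
  shows "(\<lambda>j. y j * T (fock_basis j) k) sums T y k"
proof -
  have lin: "\<And>a b c d. a \<in> fock \<Longrightarrow> b \<in> fock \<Longrightarrow> T (\<lambda>k. c * a k + d * b k) = (\<lambda>k. c * T a k + d * T b k)"
    using T unfolding fock_unitary_def by blast
  have inn: "\<And>a b. a \<in> fock \<Longrightarrow> b \<in> fock \<Longrightarrow> fock_inner (T a) (T b) = fock_inner a b"
    using T unfolding fock_unitary_def by blast
  have img: "\<And>a. a \<in> fock \<Longrightarrow> T a \<in> fock"
    using T unfolding fock_unitary_def by blast
  have n2T: "n2 (T a) = n2 a" if "a \<in> fock" for a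
    using n2_inner[OF that] n2_inner[OF img[OF that]] inn[OF that that] by simp
  define yN where "yN N = (\<lambda>i. if i < N then y i else 0)" for N
  have yNf: "yN N \<in> fock" for N by (rule fock_finite_support[of N]) (auto simp: yN_def)
  have TyN: "T (yN N) = (\<lambda>k. \<Sum>j<N. y j * T (fock_basis j) k)" for N
  proof (induction N)
    case 0
    have "yN 0 = (\<lambda>k. 0 * y k + 0 * y k)" by (simp add: yN_def)
    then have "T (yN 0) = (\<lambda>k. 0 * T y k + 0 * T y k)" using lin[OF y y, of 0 0] by simp
    then show ?case by simp
  next
    case (Suc N)
    have "yN (Suc N) = (\<lambda>i. 1 * yN N i + y N * fock_basis N i)"
      by (rule ext) (auto simp: yN_def fock_basis_def less_Suc_eq)
    moreover have "T (\<lambda>i. 1 * yN N i + y N * fock_basis N i) = (\<lambda>k. 1 * T (yN N) k + y N * T (fock_basis N) k)"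
      by (rule lin[OF yNf fock_basis_in])
    ultimately have "T (yN (Suc N)) = (\<lambda>k. 1 * T (yN N) k + y N * T (fock_basis N) k)"
      by simp
    then show ?case using Suc by simp
  qed
  show ?thesis
    unfolding sums_def
  proof (rule LIMSEQ_I)
    fix r :: real assume r: "r > 0"
    obtain N0 where N0: "\<forall>N\<ge>N0. n2 (\<lambda>j. if j < N then 0 else y j) < r^2"
      using tail_small[OF y, of "r^2"] r by auto
    have "norm ((\<Sum>j<N. y j * T (fock_basis j) k) - T y k) < r" if "N \<ge> N0" for N
    proof -
      have dd: "(\<lambda>j. if j < N then 0 else y j) = (\<lambda>i. 1 * y i + (-1) * yN N i)"
        by (auto simp: yN_def)
      have df: "(\<lambda>j. if j < N then 0 else y j) \<in> fock" unfolding dd by (rule fock_lin[OF y yNf])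
      have "T (\<lambda>j. if j < N then 0 else y j) = (\<lambda>k. T y k - T (yN N) k)"
        unfolding dd using lin[OF y yNf, of 1 "-1"] by simp
      then have "norm ((\<Sum>j<N. y j * T (fock_basis j) k) - T y k) = cmod (T (\<lambda>j. if j < N then 0 else y j) k)"
        using TyN[of N] by (simp add: norm_minus_commute)
      also have "\<dots> \<le> sqrt (n2 (T (\<lambda>j. if j < N then 0 else y j)))"
        by (rule coord_bound[OF img[OF df]])
      also have "\<dots> = sqrt (n2 (\<lambda>j. if j < N then 0 else y j))" by (simp add: n2T[OF df])
      also have "\<dots> < sqrt (r^2)"
      proof (rule real_sqrt_less_mono)
        show "n2 (\<lambda>j. if j < N then 0 else y j) < r^2" using N0 that by blast
      qed
      also have "\<dots> = r" using r by simp
      finally show ?thesis .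
    qed
    then show "\<exists>no. \<forall>n\<ge>no. norm ((\<Sum>j<n. y j * T (fock_basis j) k) - T y k) < r" by blast
  qed
qed

lemma weyl_unique:
  assumes T: "is_weyl u T"
  shows "T = W0 u"
proof -
  have TU: "fock_unitary T" using T by (simp add: is_weyl_def)
  have T0U: "fock_unitary (W0 u)" using W0_weyl[of u] by (simp add: is_weyl_def)
  have basis_eq: "T (fock_basis j) k = W0 u (fock_basis j) k" for j k
  proof -
    define b where "b j = (T (fock_basis j) k - W0 u (fock_basis j) k) / of_real (sqrt (fact j))" for j
    have "(\<lambda>j. b j * v^j) sums 0" for v
    proof -
      have "T (expvec v) = W0 u (expvec v)"
        using T W0_weyl[of u] by (simp add: is_weyl_def)
      moreover have "(\<lambda>j. expvec v j * T (fock_basis j) k - expvec v j * W0 u (fock_basis j) k) sums (T (expvec v) k - W0 u (expvec v) k)"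
        by (rule sums_diff[OF unitary_expand[OF TU expvec_fock] unitary_expand[OF T0U expvec_fock]])
      ultimately have s: "(\<lambda>j. expvec v j * T (fock_basis j) k - expvec v j * W0 u (fock_basis j) k) sums 0"
        by simp
      have "(\<lambda>j. b j * v^j) = (\<lambda>j. expvec v j * T (fock_basis j) k - expvec v j * W0 u (fock_basis j) k)"
        by (rule ext) (simp add: b_def expvec_def divide_inverse right_diff_distrib left_diff_distrib mult_ac)
      then show ?thesis using s by simp
    qed
    then have "b j = 0" by (rule powser_coeffs_zero)
    then show ?thesis by (simp add: b_def)
  qed
  show ?thesis
  proof
    fix y
    show "T y = W0 u y"
    proof (cases "y \<in> fock")
      case False
      have "T y = (\<lambda>_. 0)" using TU False unfolding fock_unitary_def by blast
      moreover have "W0 u y = (\<lambda>_. 0)" using T0U False unfolding fock_unitary_def by blast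
      ultimately show ?thesis by simp
    next
      case True
      show ?thesis
      proof
        fix k
        have "(\<lambda>j. y j * T (fock_basis j) k) sums W0 u y k"
          using unitary_expand[OF T0U True, of k] basis_eq by simp
        then show "T y k = W0 u y k" using unitary_expand[OF TU True, of k] sums_unique2 by blast
      qed
    qed
  qed
qed

lemma weyl_eq: "weyl u = W0 u"
  unfolding weyl_def by (rule the_equality[of "is_weyl u" "W0 u", OF W0_weyl weyl_unique])

lemma basis_sums: "(\<lambda>i. f i * fock_basis j i) sums f j"
proof -
  have "(\<lambda>i. f i * fock_basis j i) = (\<lambda>i. if i = j then f i else 0)"
    by (auto simp: fock_basis_def)
  then show ?thesis using sums_single[of j f] by simp
qed

lemma weyl_elem_diag: "weyl_elem u j j = wm u j j"
proof -
  have "W0 u (fock_basis j) = (\<lambda>k. wm u k j)"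
  proof
    fix k
    show "W0 u (fock_basis j) k = wm u k j"
      using basis_sums[of "wm u k" j] fock_basis_in[of j] by (simp add: W0_def mop_apply sums_iff)
  qed
  moreover have "fock_inner (fock_basis j) y = y j" for y
  proof -
    have "(\<lambda>k. cnj (fock_basis j k) * y k) = (\<lambda>k. y k * fock_basis j k)"
      by (auto simp: fock_basis_def)
    then show ?thesis unfolding fock_inner_def using basis_sums[of y j] by (simp add: sums_iff)
  qed
  ultimately show ?thesis unfolding weyl_elem_def weyl_eq by simp
qed


definition tt :: "real \<Rightarrow> nat \<Rightarrow> real" where
  "tt x i = (-x)^i / fact i"

lemma tt_0 [simp]: "tt x 0 = 1" by (simp add: tt_def)

lemma tt_Suc: "tt x (Suc i) = - x * tt x i / real (Suc i)"
  by (simp add: tt_def field_simps del: of_nat_Suc)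

definition Lg :: "real \<Rightarrow> nat \<Rightarrow> real" where
  "Lg x j = (\<Sum>i\<le>j. real (j choose i) * tt x i)"

definition Qg :: "real \<Rightarrow> nat \<Rightarrow> real" where
  "Qg x j = (\<Sum>i\<le>j. real (Suc j choose Suc i) * tt x i)"

definition Sg :: "real \<Rightarrow> nat \<Rightarrow> real" where
  "Sg x n = (\<Sum>i<n. Lg x i)"

lemma Lg_diff: "Lg x (Suc j) - Lg x j = (\<Sum>i\<le>j. real (j choose i) * tt x (Suc i))"
proof -
  have a: "Lg x (Suc j) = 1 + (\<Sum>i\<le>j. real (j choose i) * tt x (Suc i))
                         + (\<Sum>i\<le>j. real (j choose Suc i) * tt x (Suc i))"
    unfolding Lg_def sum.atMost_Suc_shift by (simp add: sum.distrib distrib_right)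
  have b: "Lg x j = 1 + (\<Sum>i\<le>j. real (j choose Suc i) * tt x (Suc i))"
  proof -
    have "Lg x j = (\<Sum>i\<le>Suc j. real (j choose i) * tt x i)"
      unfolding Lg_def by simp
    also have "\<dots> = 1 + (\<Sum>i\<le>j. real (j choose Suc i) * tt x (Suc i))"
      unfolding sum.atMost_Suc_shift by simp
    finally show ?thesis .
  qed
  show ?thesis using a b by simp
qed

lemma Lg_rec_Q: "real (Suc j) * (Lg x (Suc j) - Lg x j) = - x * Qg x j"
proof -
  have "real (Suc j) * (Lg x (Suc j) - Lg x j) = (\<Sum>i\<le>j. (real (Suc j) * real (j choose i)) * tt x (Suc i))"
    unfolding Lg_diff sum_distrib_left by (simp add: mult_ac)
  also have "\<dots> = (\<Sum>i\<le>j. - x * (real (Suc j choose Suc i) * tt x i))"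
  proof (intro sum.cong refl)
    fix i
    have e: "real (Suc j) * real (j choose i) = real (Suc j choose Suc i) * real (Suc i)"
      using Suc_times_binomial_eq[of j i] by (metis of_nat_mult)
    have nz: "real (Suc i) \<noteq> 0" by simp
    show "(real (Suc j) * real (j choose i)) * tt x (Suc i) = - x * (real (Suc j choose Suc i) * tt x i)"
      unfolding e tt_Suc using nz by (simp add: field_simps del: of_nat_Suc)
  qed
  also have "\<dots> = - x * Qg x j" unfolding Qg_def sum_distrib_left ..
  finally show ?thesis .
qed

lemma Qg_0: "Qg x 0 = 1" by (simp add: Qg_def)

lemma Qg_Suc: "Qg x (Suc j) = Qg x j + Lg x (Suc j)"
proof -
  have "Qg x (Suc j) = (\<Sum>i\<le>Suc j. real (Suc j choose i) * tt x i) + (\<Sum>i\<le>Suc j. real (Suc j choose Suc i) * tt x i)"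
    unfolding Qg_def binomial_Suc_Suc of_nat_add distrib_right sum.distrib ..
  also have "(\<Sum>i\<le>Suc j. real (Suc j choose Suc i) * tt x i) = Qg x j"
    unfolding Qg_def sum.atMost_Suc by (simp add: binomial_eq_0)
  finally show ?thesis unfolding Lg_def by simp
qed

lemma Qg_Sg: "Qg x j = Sg x (Suc j)"
  by (induction j) (simp_all add: Qg_0 Qg_Suc Sg_def Lg_def)

lemma Lg_0: "Lg x 0 = 1" by (simp add: Lg_def)

lemma Lg_rec: "real (Suc n) * (Lg x (Suc n) - Lg x n) = - x * Sg x (Suc n)"
  using Lg_rec_Q[of n x] by (simp add: Qg_Sg)

lemma Lg_Suc: "Lg x (Suc n) = Lg x n - x * (Sg x n + Lg x n) / real (Suc n)"
proof -
  have "Sg x (Suc n) = Sg x n + Lg x n" by (simp add: Sg_def)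
  then show ?thesis using Lg_rec[of n x] by (simp add: field_simps del: of_nat_Suc)
qed

definition Eg :: "real \<Rightarrow> nat \<Rightarrow> real" where
  "Eg x n = x * (Sg x n)^2 + x * Lg x n * Sg x n + real n * (Lg x n)^2"

definition Wg :: "real \<Rightarrow> nat \<Rightarrow> real" where
  "Wg x n = Eg x n - Lg x n * Sg x n / 2"

lemma Eg_Suc: "Eg x (Suc n) = Eg x n + (Lg x n)^2"
proof -
  define P where "P = Lg x n"
  define S where "S = Sg x n"
  define m where "m = real (Suc n)"
  have m0: "m > 0" by (simp add: m_def)
  have Sg1: "Sg x (Suc n) = S + P" by (simp add: Sg_def S_def P_def)
  have L1: "Lg x (Suc n) = P - x * (S + P) / m" by (simp add: Lg_Suc P_def S_def m_def)
  have "Eg x (Suc n) = x * (S+P)^2 + x * (P - x * (S + P) / m) * (S+P) + m * (P - x * (S + P) / m)^2"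
    unfolding Eg_def Sg1 L1 m_def ..
  also have "\<dots> = x * S^2 + x * P * S + (m - 1) * P^2 + P^2"
    using m0 by (simp add: field_simps power2_eq_square)
  also have "\<dots> = Eg x n + (Lg x n)^2"
    unfolding Eg_def P_def S_def m_def by simp
  finally show ?thesis .
qed

lemma Eg_0: "Eg x 0 = 0" by (simp add: Eg_def Sg_def)

lemma Eg_sum: "Eg x n = (\<Sum>i<n. (Lg x i)^2)"
  by (induction n) (simp_all add: Eg_0 Eg_Suc)

lemma Eg_ge1: "n \<ge> 1 \<Longrightarrow> Eg x n \<ge> 1"
proof -
  assume "n \<ge> 1"
  then have "{0} \<subseteq> {..<n}" by auto
  then have "(\<Sum>i\<in>{0}. (Lg x i)^2) \<le> (\<Sum>i<n. (Lg x i)^2)"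
    by (intro sum_mono2) auto
  then show ?thesis by (simp add: Eg_sum Lg_0)
qed

lemma Wg_form: "Wg x n = x * (Sg x (Suc n))^2 - (x + 1/2) * Lg x n * Sg x (Suc n) + (real n + 1/2) * (Lg x n)^2"
proof -
  have h: "Sg x n = Sg x (Suc n) - Lg x n" by (simp add: Sg_def)
  show ?thesis unfolding Wg_def Eg_def h by (simp add: field_simps power2_eq_square)
qed

lemma Eg_form: "Eg x n = x * (Sg x (Suc n))^2 - x * Lg x n * Sg x (Suc n) + real n * (Lg x n)^2"
proof -
  have h: "Sg x n = Sg x (Suc n) - Lg x n" by (simp add: Sg_def)
  show ?thesis unfolding Eg_def h by (simp add: field_simps power2_eq_square)
qed

lemma Wg_Suc: "Wg x (Suc n) - Wg x n = (Lg x n)^2 / 2 + x * (Sg x (Suc n))^2 / (2 * real (Suc n))"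
proof -
  define P where "P = Lg x n"
  define T where "T = Sg x (Suc n)"
  define m where "m = real (Suc n)"
  have m0: "m > 0" by (simp add: m_def)
  have L1: "Lg x (Suc n) = P - x * T / m"
    using Lg_Suc[of x n] by (simp add: P_def T_def m_def Sg_def)
  have "Wg x (Suc n) = Eg x (Suc n) - Lg x (Suc n) * Sg x (Suc n) / 2" by (simp add: Wg_def)
  also have "\<dots> = Eg x n + P^2 - (P - x * T / m) * T / 2" by (simp add: Eg_Suc L1 P_def T_def)
  finally have "Wg x (Suc n) - Wg x n = P^2 - (P - x * T / m) * T / 2 + Lg x n * Sg x n / 2"
    by (simp add: Wg_def)
  also have "Sg x n = T - P" by (simp add: T_def P_def Sg_def)
  finally show ?thesis using m0 unfolding P_def[symmetric] T_def[symmetric] m_def[symmetric]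
    by (simp add: field_simps power2_eq_square)
qed


lemma psd:
  fixes a b c P T :: real
  assumes a: "a > 0" and d: "b^2 \<le> 4*a*c"
  shows "0 \<le> a*P^2 + b*P*T + c*T^2"
proof -
  have id: "4*a*(a*P^2 + b*P*T + c*T^2) = (2*a*P + b*T)^2 + (4*a*c - b^2)*T^2"
    by (simp add: power2_eq_square algebra_simps)
  have "0 \<le> (2*a*P + b*T)^2 + (4*a*c - b^2)*T^2"
    using d by (intro add_nonneg_nonneg mult_nonneg_nonneg) auto
  then have "0 \<le> 4*a*(a*P^2 + b*P*T + c*T^2)" using id by simp
  then show ?thesis using a by (simp add: zero_le_mult_iff)
qed

lemma term_bound:
  fixes i :: real
  assumes i: "i \<ge> 1"
  shows "1 / i powr (3/4) \<le> 4 * (i powr (1/4) - (i - 1) powr (1/4))"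
proof -
  define a where "a = i powr (1/4)"
  define b where "b = (i - 1) powr (1/4)"
  have a0: "a > 0" using i by (simp add: a_def)
  have b0: "b \<ge> 0" by (simp add: b_def)
  have ba: "b \<le> a" unfolding a_def b_def using i by (intro powr_mono2) auto
  have a4: "a^4 = i" unfolding a_def using i by (simp add: powr_power)
  have b4: "b^4 = i - 1"
  proof (cases "i = 1")
    case True then show ?thesis by (simp add: b_def)
  next
    case False then show ?thesis unfolding b_def using i by (simp add: powr_power)
  qed
  have a3: "a^3 = i powr (3/4)" unfolding a_def using i by (simp add: powr_power)
  have fact1: "a^4 - b^4 = (a - b) * (a^3 + a^2*b + a*b^2 + b^3)"
    by (simp add: eval_nat_numeral algebra_simps)
  have t1: "a^2*b \<le> a^3"
  proof -
    have "a^2*b \<le> a^2*a" using ba by (intro mult_left_mono) auto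
    then show ?thesis by (simp add: eval_nat_numeral)
  qed
  have t2: "a*b^2 \<le> a^3"
  proof -
    have "b^2 \<le> a^2" using ba b0 by (intro power_mono) auto
    then have "a*b^2 \<le> a*a^2" using a0 by (intro mult_left_mono) auto
    then show ?thesis by (simp add: eval_nat_numeral)
  qed
  have t3: "b^3 \<le> a^3" using ba b0 by (intro power_mono) auto
  have "1 = (a - b) * (a^3 + a^2*b + a*b^2 + b^3)" using fact1 a4 b4 by simp
  also have "\<dots> \<le> (a - b) * (4 * a^3)"
    using t1 t2 t3 ba by (intro mult_left_mono) auto
  finally have "1 \<le> (a - b) * (4 * a^3)" .
  then have "1 \<le> 4 * (a - b) * a^3" by (metis mult.assoc mult.commute)
  then have "1 / a^3 \<le> 4 * (a - b)" using a0 by (simp add: divide_le_eq)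
  then show ?thesis using a3 a_def b_def by simp
qed

lemma sum_powr_bound:
  assumes M: "1 \<le> M" and n: "M \<le> n"
  shows "(\<Sum>i\<in>{M..<n}. 1 / real i powr (3/4)) \<le> 4 * real (n - 1) powr (1/4)"
  using n
proof (induction n rule: dec_induct)
  case base then show ?case by simp
next
  case (step n)
  have n1: "real n \<ge> 1" using M step.hyps(1) by simp
  have "(\<Sum>i\<in>{M..<Suc n}. 1 / real i powr (3/4)) = (\<Sum>i\<in>{M..<n}. 1 / real i powr (3/4)) + 1 / real n powr (3/4)"
    using step.hyps(1) by simp
  also have "\<dots> \<le> 4 * real (n - 1) powr (1/4) + 4 * (real n powr (1/4) - (real n - 1) powr (1/4))"
    using step.IH term_bound[OF n1] by simp
  also have "real (n - 1) = real n - 1" using n1 by (simp add: of_nat_diff)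
  finally show ?case by simp
qed


lemma W_props:
  assumes x: "x > 0" and cond: "(2*x+1)^2 \<le> 4*x*(real n - 4)"
  shows "Wg x n \<le> 3 * real n * (Wg x (Suc n) - Wg x n)"
    and "Eg x n \<le> 2 * Wg x n"
    and "Wg x n \<le> 2 * Eg x n"
proof -
  define P where "P = Lg x n"
  define T where "T = Sg x (Suc n)"
  define r where "r = real n"
  have sq: "(2*x+1)^2 > 0" using x by simp
  have r4: "r > 4"
  proof (rule ccontr)
    assume "\<not> r > 4"
    then have "4*x*(r - 4) \<le> 0" using x by (simp add: mult_nonneg_nonpos)
    then show False using cond sq unfolding r_def by linarith
  qed
  have cond': "(2*x+1)^2 \<le> 4*x*(r - 4)" using cond by (simp add: r_def)
  have W: "Wg x n = x * T^2 - (x + 1/2) * P * T + (r + 1/2) * P^2"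
    unfolding P_def T_def r_def by (rule Wg_form)
  have E: "Eg x n = x * T^2 - x * P * T + r * P^2"
    unfolding P_def T_def r_def by (rule Eg_form)
  have dW: "Wg x (Suc n) - Wg x n = P^2 / 2 + x * T^2 / (2 * (r + 1))"
    unfolding P_def T_def r_def using Wg_Suc[of x n] by simp
  show "Wg x n \<le> 3 * real n * (Wg x (Suc n) - Wg x n)"
  proof -
    have a: "(r - 1) * (r + 1) > 0" using r4 by simp
    have d: "((r + 1) * (2*x+1))^2 \<le> 4 * ((r - 1) * (r + 1)) * (x * (r - 2))"
    proof -
      have "((r + 1) * (2*x+1))^2 = (r+1)^2 * (2*x+1)^2" by (simp add: power_mult_distrib)
      also have "\<dots> \<le> (r+1)^2 * (4*x*(r - 4))" using cond' by (intro mult_left_mono) auto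
      also have "\<dots> = 4 * x * (r+1) * ((r + 1) * (r - 4))" by (simp add: power2_eq_square algebra_simps)
      also have "\<dots> \<le> 4 * x * (r+1) * ((r - 1) * (r - 2))"
        using x r4 by (intro mult_left_mono) (auto simp: algebra_simps)
      also have "\<dots> = 4 * ((r - 1) * (r + 1)) * (x * (r - 2))" by (simp add: algebra_simps)
      finally show ?thesis .
    qed
    have "0 \<le> ((r - 1) * (r + 1)) * P^2 + ((r + 1) * (2*x+1)) * P * T + (x * (r - 2)) * T^2"
      by (rule psd[OF a d])
    moreover have "((r - 1) * (r + 1)) * P^2 + ((r + 1) * (2*x+1)) * P * T + (x * (r - 2)) * T^2
        = 2 * (r + 1) * (3 * r * (P^2 / 2 + x * T^2 / (2 * (r + 1))) - (x * T^2 - (x + 1/2) * P * T + (r + 1/2) * P^2))"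
      using r4 by (simp add: field_simps power2_eq_square)
    ultimately have "0 \<le> 2 * (r + 1) * (3 * r * (P^2 / 2 + x * T^2 / (2 * (r + 1))) - (x * T^2 - (x + 1/2) * P * T + (r + 1/2) * P^2))"
      by simp
    then have "0 \<le> 3 * r * (P^2 / 2 + x * T^2 / (2 * (r + 1))) - (x * T^2 - (x + 1/2) * P * T + (r + 1/2) * P^2)"
      using r4 by (simp add: zero_le_mult_iff)
    then have G: "(x * T^2 - (x + 1/2) * P * T + (r + 1/2) * P^2) \<le> 3 * r * (P^2 / 2 + x * T^2 / (2 * (r + 1)))"
      by simp
    show ?thesis unfolding r_def[symmetric] dW using G W by simp
  qed
  show "Eg x n \<le> 2 * Wg x n"
  proof -
    have a: "r + 1 > 0" using r4 by simp
    have d: "(-(x+1))^2 \<le> 4 * (r + 1) * x"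
    proof -
      have "(-(x+1))^2 \<le> (2*x+1)^2" using x by (simp add: power2_eq_square algebra_simps)
      also have "\<dots> \<le> 4*x*(r - 4)" by (rule cond')
      also have "\<dots> \<le> 4 * (r + 1) * x" using x by (simp add: algebra_simps)
      finally show ?thesis .
    qed
    have "0 \<le> (r + 1) * P^2 + (-(x+1)) * P * T + x * T^2" by (rule psd[OF a d])
    then show ?thesis unfolding W E by (simp add: algebra_simps)
  qed
  show "Wg x n \<le> 2 * Eg x n"
  proof -
    have a: "r - 1/2 > 0" using r4 by simp
    have d: "(-(x - 1/2))^2 \<le> 4 * (r - 1/2) * x"
    proof -
      have "(-(x - 1/2))^2 \<le> (2*x+1)^2" using x by (simp add: power2_eq_square algebra_simps)
      also have "\<dots> \<le> 4*x*(r - 4)" by (rule cond')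
      also have "\<dots> \<le> 4 * (r - 1/2) * x" using x by (simp add: algebra_simps)
      finally show ?thesis .
    qed
    have "0 \<le> (r - 1/2) * P^2 + (-(x - 1/2)) * P * T + x * T^2" by (rule psd[OF a d])
    then show ?thesis unfolding W E by (simp add: algebra_simps)
  qed
qed


lemma cube_bound:
  assumes t: "t \<ge> (0::real)"
  shows "(1 + t/3)^3 \<ge> 1 + t"
proof -
  have e: "(1 + t/3)^3 = 1 + t + t^2/3 + t^3/27"
    by (simp add: power3_eq_cube power2_eq_square field_simps)
  have "t^2 \<ge> 0" by simp
  moreover have "t^3 \<ge> 0" using t by simp
  ultimately show ?thesis unfolding e by linarith
qed

theorem Lg_not_small:
  assumes x: "x > 0"
  shows "\<not> (\<exists>K N1. \<forall>j\<ge>N1. (Lg x j)^2 \<le> K / real j powr (3/4))"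
proof
  assume "\<exists>K N1. \<forall>j\<ge>N1. (Lg x j)^2 \<le> K / real j powr (3/4)"
  then obtain K N1 where KN: "\<And>j. j \<ge> N1 \<Longrightarrow> (Lg x j)^2 \<le> K / real j powr (3/4)" by blast
  define N0 where "N0 = nat \<lceil>5 + (2*x+1)^2 / (4*x)\<rceil>"
  define M where "M = max (max N0 N1) 1"
  have M1: "M \<ge> 1" and MN1: "M \<ge> N1" and MN0: "M \<ge> N0" by (auto simp: M_def)
  have cond: "(2*x+1)^2 \<le> 4*x*(real n - 4)" if "n \<ge> M" for n
  proof -
    have "real n \<ge> real N0" using that MN0 by simp
    moreover have "real N0 \<ge> 5 + (2*x+1)^2 / (4*x)" unfolding N0_def by linarith
    ultimately have "real n - 4 \<ge> 1 + (2*x+1)^2 / (4*x)" by simp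
    then have "4*x*(real n - 4) \<ge> 4*x*(1 + (2*x+1)^2 / (4*x))" using x by (intro mult_left_mono) auto
    also have "4*x*(1 + (2*x+1)^2 / (4*x)) = 4*x + (2*x+1)^2" using x by (simp add: field_simps)
    finally show ?thesis using x by simp
  qed
  have K0: "K \<ge> 0"
  proof -
    have "0 \<le> (Lg x M)^2" by simp
    also have "\<dots> \<le> K / real M powr (3/4)" using KN MN1 by simp
    finally show ?thesis using M1 by (simp add: zero_le_divide_iff)
  qed
  have Wpos: "Wg x n \<ge> 1/2" if "n \<ge> M" for n
    using W_props(2)[OF x cond[OF that]] Eg_ge1[of n x] that M1 by simp
  have Wstep: "Wg x (Suc n) \<ge> Wg x n * (1 + 1 / (3 * real n))" if "n \<ge> M" for n
  proof -
    have n0: "real n > 0" using that M1 by simp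
    have "Wg x n \<le> 3 * real n * (Wg x (Suc n) - Wg x n)" by (rule W_props(1)[OF x cond[OF that]])
    then have "Wg x n / (3 * real n) \<le> Wg x (Suc n) - Wg x n" using n0 by (simp add: divide_le_eq mult_ac)
    then show ?thesis by (simp add: algebra_simps)
  qed
  define c where "c = (Wg x M)^3 / real M"
  have c0: "c > 0" unfolding c_def using Wpos[of M] M1 by simp
  have grow: "(Wg x n)^3 \<ge> c * real n" if "n \<ge> M" for n
    using that
  proof (induction n rule: dec_induct)
    case base then show ?case using M1 by (simp add: c_def)
  next
    case (step n)
    have nM: "n \<ge> M" using step.hyps(1) .
    have n0: "real n > 0" using nM M1 by simp
    have W0: "Wg x n \<ge> 0" using Wpos[OF nM] by simp
    have "c * real (Suc n) = c * real n * (1 + 1 / real n)" using n0 by (simp add: field_simps)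
    also have "\<dots> \<le> (Wg x n)^3 * (1 + 1 / real n)"
      using step.IH n0 by (intro mult_right_mono) auto
    also have "\<dots> \<le> (Wg x n)^3 * (1 + (1 / real n) / 3)^3"
      using cube_bound[of "1 / real n"] n0 W0 by (intro mult_left_mono) auto
    also have "\<dots> = (Wg x n * (1 + 1 / (3 * real n)))^3" by (simp add: power_mult_distrib mult.commute)
    also have "\<dots> \<le> (Wg x (Suc n))^3"
      using Wstep[OF nM] W0 n0 by (intro power_mono) auto
    finally show ?case .
  qed
  define A where "A = Eg x M"
  have A0: "A \<ge> 0" unfolding A_def Eg_sum by (intro sum_nonneg) auto
  have Ebound: "Eg x n \<le> A + 4 * K * real n powr (1/4)" if "n \<ge> M" for n
  proof -
    have split: "{..<n} = {..<M} \<union> {M..<n}" using that by auto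
    have "Eg x n = A + (\<Sum>i\<in>{M..<n}. (Lg x i)^2)"
      unfolding Eg_sum A_def split by (subst sum.union_disjoint) auto
    also have "(\<Sum>i\<in>{M..<n}. (Lg x i)^2) \<le> (\<Sum>i\<in>{M..<n}. K * (1 / real i powr (3/4)))"
      using KN MN1 by (intro sum_mono) auto
    also have "\<dots> = K * (\<Sum>i\<in>{M..<n}. 1 / real i powr (3/4))" by (simp add: sum_distrib_left)
    also have "\<dots> \<le> K * (4 * real (n - 1) powr (1/4))"
      using sum_powr_bound[OF M1 that] K0 by (intro mult_left_mono) auto
    also have "\<dots> \<le> K * (4 * real n powr (1/4))"
      using K0 by (intro mult_left_mono) (auto intro!: powr_mono2)
    finally show ?thesis by (simp add: mult_ac)
  qed
  define B where "B = A + 4 * K"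
  have B0: "B \<ge> 0" using A0 K0 by (simp add: B_def)
  define m where "m = max M (nat \<lceil>8 * B^3 / c\<rceil> + 1)"
  have mM: "m \<ge> M" by (simp add: m_def)
  have m1: "real m \<ge> 1" using mM M1 by simp
  have mbig: "real m > 8 * B^3 / c"
  proof -
    have "real m \<ge> real (nat \<lceil>8 * B^3 / c\<rceil> + 1)" unfolding m_def by simp
    moreover have "real (nat \<lceil>8 * B^3 / c\<rceil> + 1) > 8 * B^3 / c" by linarith
    ultimately show ?thesis by linarith
  qed
  define n where "n = m^4"
  have nm: "n \<ge> m"
  proof -
    have "m \<ge> 1" using m1 by simp
    then have "1 \<le> m^3" by simp
    then have "m * 1 \<le> m * m^3" by (intro mult_left_mono) auto
    then show ?thesis unfolding n_def by (simp add: eval_nat_numeral)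
  qed
  have nM: "n \<ge> M" using nm mM by simp
  have npow: "real n powr (1/4) = real m"
  proof -
    have p: "real m powr (real 4) = real m ^ 4" using m1 by (intro powr_realpow) simp
    have rn: "real n = real m powr 4" unfolding n_def using p by simp
    have "real n powr (1/4) = (real m powr 4) powr (1/4)" unfolding rn ..
    also have "\<dots> = real m powr (4 * (1/4))" by (rule powr_powr)
    also have "\<dots> = real m" using m1 by simp
    finally show ?thesis .
  qed
  have "c * real n \<le> (Wg x n)^3" by (rule grow[OF nM])
  also have "\<dots> \<le> (2 * Eg x n)^3"
    using W_props(3)[OF x cond[OF nM]] Wpos[OF nM] by (intro power_mono) auto
  also have "\<dots> \<le> (2 * (B * real m))^3"
  proof (intro power_mono)
    have "Eg x n \<le> A + 4 * K * real m" using Ebound[OF nM] npow by simp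
    also have "\<dots> \<le> A * real m + 4 * K * real m" using A0 m1 by (simp add: mult_left_mono[of 1 "real m" A, simplified])
    also have "\<dots> = B * real m" by (simp add: B_def algebra_simps)
    finally show "2 * Eg x n \<le> 2 * (B * real m)" by simp
    show "0 \<le> 2 * Eg x n" using Eg_ge1[of n x] nM M1 by simp
  qed
  finally have "c * real m^4 \<le> 8 * B^3 * real m^3" unfolding n_def by (simp add: power_mult_distrib)
  then have "c * real m * real m^3 \<le> 8 * B^3 * real m^3" by (simp add: eval_nat_numeral mult_ac)
  then have "c * real m \<le> 8 * B^3" using m1 by simp
  moreover have "c * real m > 8 * B^3" using mbig c0 by (simp add: field_simps)
  ultimately show False by simp
qed


lemma Lg_alt: "Lg x j = (\<Sum>m\<le>j. real (j choose m) * (-x)^(j-m) / fact (j-m))"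
proof -
  have "Lg x j = (\<Sum>i=0..j. real (j choose i) * tt x i)" unfolding Lg_def atMost_atLeast0 ..
  also have "\<dots> = (\<Sum>i=0..j. real (j choose (j + 0 - i)) * tt x (j + 0 - i))"
    by (rule sum.atLeastAtMost_rev)
  also have "\<dots> = (\<Sum>m=0..j. real (j choose m) * (-x)^(j-m) / fact (j-m))"
  proof (intro sum.cong refl)
    fix m assume "m \<in> {0..j}"
    then have "m \<le> j" by simp
    then show "real (j choose (j + 0 - m)) * tt x (j + 0 - m) = real (j choose m) * (-x)^(j-m) / fact (j-m)"
      by (simp add: tt_def binomial_symmetric[of m j, symmetric])
  qed
  finally show ?thesis unfolding atMost_atLeast0 .
qed

lemma wm_diag: "wm u j j = of_real (exp (- ((cmod u)^2/2)) * Lg ((cmod u)^2) j)"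
proof -
  define x where "x = (cmod u)^2"
  have ux0: "u * cnj u = of_real x" unfolding x_def by (rule complex_norm_square[symmetric])
  have ux: "u * (- cnj u) = - of_real x" using ux0 by simp
  have "of_real (sqrt (fact j) * sqrt (fact j)) * acoef u (- cnj u) j j
      = (\<Sum>m\<le>j. of_real (real (j choose m) * (-x)^(j-m) / fact (j-m)) :: complex)"
    unfolding acoef_min min.idem sum_distrib_left
  proof (intro sum.cong refl)
    fix m assume "m \<in> {..j}"
    then have mj: "m \<le> j" by simp
    have b: "real (j choose m) = fact j / (fact m * fact (j - m))" using mj by (rule binomial_fact)
    have p: "u^(j-m) * (- cnj u)^(j-m) = of_real ((-x)^(j-m))"
      by (simp add: power_mult_distrib[symmetric] ux ux0)
    show "of_real (sqrt (fact j) * sqrt (fact j)) * (u^(j-m) * (- cnj u)^(j-m) / (fact m * fact (j-m) * fact (j-m)))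
        = (of_real (real (j choose m) * (-x)^(j-m) / fact (j-m)) :: complex)"
      unfolding p b by (simp add: field_simps)
  qed
  also have "\<dots> = of_real (Lg x j)" unfolding Lg_alt of_real_sum ..
  finally have "of_real (sqrt (fact j) * sqrt (fact j)) * acoef u (- cnj u) j j = (of_real (Lg x j) :: complex)" .
  then show ?thesis unfolding wm_def x_def by (simp add: mult.assoc)
qed

lemma Lg_zero: "Lg 0 j = 1"
proof -
  have "Lg 0 j = (\<Sum>i\<le>j. if i = 0 then 1 else 0)"
    unfolding Lg_def tt_def by (intro sum.cong refl) auto
  then show ?thesis by simp
qed

theorem propositionA3:
  fixes u :: complex
  shows "\<exists>C>0. infinite {j::nat. cmod (weyl_elem u j j) \<ge> C / (real j powr (3/8))}"
proof -
  define x where "x = (cmod u)^2"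
  have d: "cmod (weyl_elem u j j) = exp (- (x/2)) * \<bar>Lg x j\<bar>" for j
    unfolding weyl_elem_diag wm_diag x_def norm_of_real by (simp add: abs_mult)
  show ?thesis
  proof (cases "x = 0")
    case True
    have "infinite {j::nat. cmod (weyl_elem u j j) \<ge> 1 / (real j powr (3/8))}"
      unfolding infinite_nat_iff_unbounded
    proof (intro allI exI conjI)
      fix m :: nat
      show "m < Suc m" by simp
      have "1 \<le> real (Suc m) powr (3/8)" by (rule ge_one_powr_ge_zero) auto
      then show "Suc m \<in> {j. cmod (weyl_elem u j j) \<ge> 1 / (real j powr (3/8))}"
        using d[of "Suc m"] True by (simp add: Lg_zero)
    qed
    then show ?thesis by (intro exI[of _ 1]) simp
  next
    case False
    have x: "x > 0" using False unfolding x_def by simp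
    define S where "S = {j::nat. cmod (weyl_elem u j j) \<ge> 1 / (real j powr (3/8))}"
    show ?thesis
    proof (rule ccontr)
      assume na: "\<not> ?thesis"
      have fin: "finite S"
      proof (rule ccontr)
        assume "infinite S"
        then have "\<exists>C>0. infinite {j::nat. cmod (weyl_elem u j j) \<ge> C / (real j powr (3/8))}"
          unfolding S_def by (intro exI[of _ "1::real"]) simp
        then show False using na by simp
      qed
      obtain N where N: "\<forall>j\<in>S. j \<le> N"
        using fin unfolding finite_nat_set_iff_bounded_le by blast
      have bnd: "\<forall>j\<ge>Suc N. (Lg x j)^2 \<le> exp x / real j powr (3/4)"
      proof (intro allI impI)
        fix j assume j: "j \<ge> Suc N"
        have jp: "real j powr (3/8) > 0" using j by simp
        have "j \<notin> S" using N j by auto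
        then have "cmod (weyl_elem u j j) < 1 / (real j powr (3/8))" unfolding S_def by simp
        then have "exp (- (x/2)) * \<bar>Lg x j\<bar> < 1 / (real j powr (3/8))" using d by simp
        then have lt: "exp (x/2) * (exp (- (x/2)) * \<bar>Lg x j\<bar>) < exp (x/2) * (1 / (real j powr (3/8)))"
          by (intro mult_strict_left_mono) auto
        have e: "exp (x/2) * exp (- (x/2)) = 1" by (simp add: exp_add[symmetric])
        have eqL: "exp (x/2) * (exp (- (x/2)) * \<bar>Lg x j\<bar>) = \<bar>Lg x j\<bar>"
          by (simp only: mult.assoc[symmetric] e mult_1)
        have "\<bar>Lg x j\<bar> < exp (x/2) * (1 / (real j powr (3/8)))"
          using lt unfolding eqL .
        then have "\<bar>Lg x j\<bar> < exp (x/2) / (real j powr (3/8))" by simp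
        then have "\<bar>Lg x j\<bar>^2 \<le> (exp (x/2) / (real j powr (3/8)))^2"
          by (intro power_mono) auto
        also have "\<dots> = exp x / real j powr (3/4)"
        proof -
          have "(exp (x/2))^2 = exp x" by (simp add: power2_eq_square exp_add[symmetric])
          moreover have "(real j powr (3/8))^2 = real j powr (3/4)"
          proof -
            have "real j \<noteq> 0" using j by simp
            then have "(real j powr (3/8))^2 = real j powr (of_nat 2 * (3/8))" by (rule powr_power)
            then show ?thesis by simp
          qed
          ultimately show ?thesis by (simp add: power_divide)
        qed
        finally show "(Lg x j)^2 \<le> exp x / real j powr (3/4)" by simp
      qed
      have "\<exists>K N1. \<forall>j\<ge>N1. (Lg x j)^2 \<le> K / real j powr (3/4)"
        using bnd by blast
      then show False using Lg_not_small[OF x] by simp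
    qed
  qed
qed


end
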